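(* Let $\Phi(\vec x)=\bigwedge_{i=1}^m f_i\mid g_i$ be a system of divisibility constraints in $d$ variables. Then $\log_2\big(\prod_{p\in\mathbb P(\Phi)}p\big)\le m^2(d+2)\big(\langle\|\Phi\|_\infty\rangle+2\big)$. Furthermore, if $\Phi$ has the elimination property for a total order $\preceq$ on $\vec x$, then $\log_2\big(\prod_{p\in\mathbb P_0(\Phi)}p\big)\le 64\, m^5(d+2)^4\big(\langle\|\Phi\|_\infty\rangle+2\big)$.
   Context: Linear polynomials: $f=a_1x_1+\dots+a_dx_d+c$ with integer coefficients and constant $c$; $\gcd(f)=\gcd(a_1,\dots,a_d,c)$; $f$ is primitive if $f\ne0$ and $\gcd(f)=1$; the primitive part of a non-zero $g$ is the unique primitive $f$ with $g=\gcd(g)f$; $\mathbb Z f=\{bf:b\in\mathbb Z\}$. A system of divisibility constraints is $\Phi=\bigwedge_{i=1}^m f_i\mid g_i$ with $m\ge1$ and linear polynomials $f_i\ne0$, $g_i$; $\mathrm{terms}(\Phi)=\{f_i,g_i\}$. $\mathbb P(\Phi)$ is the set of primes $p$ with $p\le m$ or $p$ dividing some coefficient or constant of some left-hand side $f_i$. Divisibility module: for primitive $f$, $M_f(\Phi)$ is the smallest set of linear polynomials containing $f$, closed under integer linear combinations, and such that whenever $g\mid h$ is a constraint of $\Phi$ and $b\cdot g\in M_f(\Phi)$ for some $b\in\mathbb Z$, then $b\cdot h\in M_f(\Phi)$. Leading variable: for a total order $x_1\preceq\dots\preceq x_d$, $\mathrm{lv}(f)$ is the largest variable with non-zero coefficient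 in $f$, and $\mathrm{lv}(f)=\bot=:x_0$ for constant $f$, $\bot$ being below all variables. Elimination property for $\preceq$: for every primitive part $f$ of a polynomial appearing as a left-hand side in $\Phi$ and every $0\le k\le d$, the set $\{g:\mathrm{lv}(g)\preceq x_k\text{ and } f\mid g\text{ appears in }\Phi\}$ is a linearly independent set forming a basis of $M_f(\Phi)\cap\mathbb Z[x_1,\dots,x_k]$. S-polynomials: for $f,g$ with $\mathrm{lv}(f)=x_l$, $\mathrm{lv}(g)=x_k$, $S(f,g)=b_k f-a_l g$ where $a_l$ is the coefficient of $x_l$ in $f$ and $b_k$ the coefficient of $x_k$ in $g$ (if $f$ is constant, $a_l:=f$; if $g$ is constant, $b_k:=g$). For a set $X$, $S(X)=X\cup\{S(f,g):f,g\in X\}$. For primitive $f$, $\Delta_f(\Phi)$ is the smallest set containing $\mathrm{terms}(\Phi)$ such that whenever $f\mid g$ occurs in $\Phi$ and $h\in\Delta_f(\Phi)$ with $\mathrm{lv}(g)=\mathrm{lv}(h)$, then $S(g,h)\in\Delta_f(\Phi)$. $\Delta(\Phi)$ is the union of $\Delta_f(\Phi)$ over all primitive parts $f$ of polynomials in $\mathrm{terms}(\Phi)$. Difficult primes: $\mathbb P_0(\Phi)$ is the set of primes $p$ such that (P1) $p\le|S(\Delta(\Phi))|$, or (P2) $p$ divides a non-zero coefficient or constant of a polynomial in $S(\Delta(\Phi))$, or (P3) $p$ divides the smallest in absolute value non-zero $\lambda\in\mathbb Z$ such that $\lambda g\in M_f(\Phi)$ for some primitive polynomial $f$ occurring in $\Phi$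 and some $g\in\Delta_f(\Phi)$ (when such $\lambda$ exists). Sizes: $\|\Phi\|_\infty$ is the maximum absolute value of a coefficient or constant of a polynomial in $\mathrm{terms}(\Phi)$; $\langle a\rangle=1+\lceil\log_2(|a|+1)\rceil$. *)

theory Defs
  imports Complex_Main "HOL-Computational_Algebra.Primes"
begin

text \<open>A linear polynomial a_1 x_1 + ... + a_d x_d + c in d variables is represented
  as a function  f :: nat => int  with  f 0 = c  (the constant),  f k = a_k  for 1 <= k <= d,
  and  f k = 0  for k > d.  A system of divisibility constraints  f_1 | g_1 /\ ... /\ f_m | g_m
  is the list of pairs [(f_1,g_1), ..., (f_m,g_m)].\<close>

type_synonym lpoly = "nat \<Rightarrow> int"
type_synonym dsystem = "(lpoly \<times> lpoly) list"

definition in_vars :: "nat \<Rightarrow> lpoly \<Rightarrow> bool" where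
  "in_vars d f \<longleftrightarrow> (\<forall>i>d. f i = 0)"

definition is_system :: "nat \<Rightarrow> dsystem \<Rightarrow> bool" where
  "is_system d \<Phi> \<longleftrightarrow> length \<Phi> \<ge> 1 \<and>
     (\<forall>(f, g) \<in> set \<Phi>. f \<noteq> (\<lambda>_. 0) \<and> in_vars d f \<and> in_vars d g)"

definition terms :: "dsystem \<Rightarrow> lpoly set" where
  "terms \<Phi> = fst ` set \<Phi> \<union> snd ` set \<Phi>"

definition lhs :: "dsystem \<Rightarrow> lpoly set" where
  "lhs \<Phi> = fst ` set \<Phi>"

definition pgcd :: "lpoly \<Rightarrow> int" where
  "pgcd f = Gcd (range f)"

definition primitive :: "lpoly \<Rightarrow> bool" where
  "primitive f \<longleftrightarrow> f \<noteq> (\<lambda>_. 0) \<and> pgcd f = 1"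

definition prim_part :: "lpoly \<Rightarrow> lpoly" where
  "prim_part g = (\<lambda>i. g i div pgcd g)"

definition smult_lp :: "int \<Rightarrow> lpoly \<Rightarrow> lpoly" where
  "smult_lp b g = (\<lambda>i. b * g i)"

inductive_set Mmod :: "dsystem \<Rightarrow> lpoly \<Rightarrow> lpoly set" for \<Phi> f where
  gen: "f \<in> Mmod \<Phi> f"
| add: "g \<in> Mmod \<Phi> f \<Longrightarrow> h \<in> Mmod \<Phi> f \<Longrightarrow> (\<lambda>i. g i + h i) \<in> Mmod \<Phi> f"
| smul: "g \<in> Mmod \<Phi> f \<Longrightarrow> smult_lp b g \<in> Mmod \<Phi> f"
| dvd: "(g, h) \<in> set \<Phi> \<Longrightarrow> smult_lp b g \<in> Mmod \<Phi> f \<Longrightarrow> smult_lp b h \<in> Mmod \<Phi> f"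

text \<open>A total order on the variables x_1..x_d is given by a permutation sigma of {1..d}:
  x_(sigma 1) < x_(sigma 2) < ... < x_(sigma d).  The leading variable is represented by its
  rank in this order, 0 standing for bottom (constant polynomials).\<close>

definition var_order :: "nat \<Rightarrow> (nat \<Rightarrow> nat) \<Rightarrow> bool" where
  "var_order d \<sigma> \<longleftrightarrow> bij_betw \<sigma> {1..d} {1..d}"

definition lv :: "nat \<Rightarrow> (nat \<Rightarrow> nat) \<Rightarrow> lpoly \<Rightarrow> nat" where
  "lv d \<sigma> f = Max ({0} \<union> {k \<in> {1..d}. f (\<sigma> k) \<noteq> 0})"

definition lc :: "nat \<Rightarrow> (nat \<Rightarrow> nat) \<Rightarrow> lpoly \<Rightarrow> int" where
  "lc d \<sigma> f = (if lv d \<sigma> f = 0 then f 0 else f (\<sigma> (lv d \<sigma> f)))"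

definition lower_polys :: "nat \<Rightarrow> (nat \<Rightarrow> nat) \<Rightarrow> nat \<Rightarrow> lpoly set" where
  "lower_polys d \<sigma> k = {h. in_vars d h \<and> lv d \<sigma> h \<le> k}"

definition lin_indep_Z :: "lpoly set \<Rightarrow> bool" where
  "lin_indep_Z G \<longleftrightarrow> finite G \<and>
     (\<forall>c. (\<forall>i. (\<Sum>g\<in>G. c g * g i) = 0) \<longrightarrow> (\<forall>g\<in>G. c g = 0))"

definition span_Z :: "lpoly set \<Rightarrow> lpoly set" where
  "span_Z G = {h. \<exists>c. h = (\<lambda>i. \<Sum>g\<in>G. c g * g i)}"

definition elimination_property :: "nat \<Rightarrow> (nat \<Rightarrow> nat) \<Rightarrow> dsystem \<Rightarrow> bool" where
  "elimination_property d \<sigma> \<Phi> \<longleftrightarrow>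
     (\<forall>f \<in> prim_part ` lhs \<Phi>. \<forall>k \<le> d.
        (let G = {g. lv d \<sigma> g \<le> k \<and> (f, g) \<in> set \<Phi>} in
          lin_indep_Z G \<and> span_Z G = Mmod \<Phi> f \<inter> lower_polys d \<sigma> k))"

definition spoly :: "nat \<Rightarrow> (nat \<Rightarrow> nat) \<Rightarrow> lpoly \<Rightarrow> lpoly \<Rightarrow> lpoly" where
  "spoly d \<sigma> f g = (\<lambda>i. lc d \<sigma> g * f i - lc d \<sigma> f * g i)"

definition SX :: "nat \<Rightarrow> (nat \<Rightarrow> nat) \<Rightarrow> lpoly set \<Rightarrow> lpoly set" where
  "SX d \<sigma> X = X \<union> {spoly d \<sigma> f g | f g. f \<in> X \<and> g \<in> X}"

inductive_set Delta :: "nat \<Rightarrow> (nat \<Rightarrow> nat) \<Rightarrow> dsystem \<Rightarrow> lpoly \<Rightarrow> lpoly set"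
  for d \<sigma> \<Phi> f where
  base: "h \<in> terms \<Phi> \<Longrightarrow> h \<in> Delta d \<sigma> \<Phi> f"
| step: "(f, g) \<in> set \<Phi> \<Longrightarrow> h \<in> Delta d \<sigma> \<Phi> f \<Longrightarrow> lv d \<sigma> g = lv d \<sigma> h
          \<Longrightarrow> spoly d \<sigma> g h \<in> Delta d \<sigma> \<Phi> f"

definition DeltaAll :: "nat \<Rightarrow> (nat \<Rightarrow> nat) \<Rightarrow> dsystem \<Rightarrow> lpoly set" where
  "DeltaAll d \<sigma> \<Phi> = (\<Union>h \<in> {h \<in> terms \<Phi>. h \<noteq> (\<lambda>_. 0)}. Delta d \<sigma> \<Phi> (prim_part h))"

definition primesP :: "dsystem \<Rightarrow> nat set" where
  "primesP \<Phi> = {p. prime p \<and> (p \<le> length \<Phi> \<or>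
      (\<exists>f \<in> lhs \<Phi>. \<exists>i. f i \<noteq> 0 \<and> int p dvd f i))}"

definition min_lambda :: "dsystem \<Rightarrow> lpoly \<Rightarrow> lpoly \<Rightarrow> nat" where
  "min_lambda \<Phi> f g = (LEAST n::nat. n > 0 \<and>
      (smult_lp (int n) g \<in> Mmod \<Phi> f \<or> smult_lp (- int n) g \<in> Mmod \<Phi> f))"

definition primesP0 :: "nat \<Rightarrow> (nat \<Rightarrow> nat) \<Rightarrow> dsystem \<Rightarrow> nat set" where
  "primesP0 d \<sigma> \<Phi> = {p. prime p \<and>
      ((infinite (SX d \<sigma> (DeltaAll d \<sigma> \<Phi>)) \<or> p \<le> card (SX d \<sigma> (DeltaAll d \<sigma> \<Phi>)))
     \<or> (\<exists>h \<in> SX d \<sigma> (DeltaAll d \<sigma> \<Phi>). \<exists>i. h i \<noteq> 0 \<and> int p dvd h i)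
     \<or> (\<exists>f g. f \<in> terms \<Phi> \<and> primitive f \<and> g \<in> Delta d \<sigma> \<Phi> f \<and>
           (\<exists>lam. lam \<noteq> 0 \<and> smult_lp lam g \<in> Mmod \<Phi> f) \<and>
           int p dvd int (min_lambda \<Phi> f g)))}"

definition norm_inf :: "nat \<Rightarrow> dsystem \<Rightarrow> int" where
  "norm_inf d \<Phi> = Max {\<bar>h i\<bar> | h i. h \<in> terms \<Phi> \<and> i \<le> d}"

definition bitsize :: "int \<Rightarrow> int" where
  "bitsize a = 1 + \<lceil>log 2 (real_of_int (\<bar>a\<bar> + 1))\<rceil>"

end

theory Submission
  imports Defs
begin

lemma lv_fin: "finite ({0} \<union> {k \<in> {1..(d::nat)}. (f::lpoly) (\<sigma> k) \<noteq> 0})"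
  by (rule finite_subset[where B="{0..d}"]) auto

lemma lv_le: "lv d \<sigma> f \<le> d"
  unfolding lv_def by (rule Max.boundedI[OF lv_fin]) auto

lemma lv_ge: "k \<in> {1..d} \<Longrightarrow> f (\<sigma> k) \<noteq> 0 \<Longrightarrow> k \<le> lv d \<sigma> f"
  unfolding lv_def by (rule Max_ge[OF lv_fin]) auto

lemma lv_zero_above: "k \<in> {1..d} \<Longrightarrow> lv d \<sigma> f < k \<Longrightarrow> f (\<sigma> k) = 0"
proof (rule ccontr)
  assume a: "k \<in> {1..d}" "lv d \<sigma> f < k" "f (\<sigma> k) \<noteq> 0"
  then have "k \<le> lv d \<sigma> f" using lv_ge by blast
  then show False using a by simp
qed

lemma lv_pos: "0 < lv d \<sigma> f \<Longrightarrow> lv d \<sigma> f \<in> {1..d} \<and> f (\<sigma> (lv d \<sigma> f)) \<noteq> 0"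
proof -
  assume a: "0 < lv d \<sigma> f"
  have "lv d \<sigma> f \<in> {0} \<union> {k \<in> {1..d}. f (\<sigma> k) \<noteq> 0}"
    unfolding lv_def by (rule Max_in[OF lv_fin]) auto
  then show ?thesis using a by auto
qed

lemma lv_le_iff: "lv d \<sigma> f \<le> k \<longleftrightarrow> (\<forall>j\<in>{1..d}. k < j \<longrightarrow> f (\<sigma> j) = 0)"
proof
  assume "lv d \<sigma> f \<le> k" then show "\<forall>j\<in>{1..d}. k < j \<longrightarrow> f (\<sigma> j) = 0"
    using lv_zero_above[of _ d \<sigma> f] by simp
next
  assume a: "\<forall>j\<in>{1..d}. k < j \<longrightarrow> f (\<sigma> j) = 0"
  show "lv d \<sigma> f \<le> k" unfolding lv_def
  proof (rule Max.boundedI[OF lv_fin])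
    fix x assume x: "x \<in> {0} \<union> {k \<in> {1..d}. f (\<sigma> k) \<noteq> 0}"
    show "x \<le> k"
    proof (rule ccontr)
      assume "\<not> x \<le> k"
      then have "k < x" by simp
      then show False using a x by auto
    qed
  qed simp
qed

lemma lv_cong: "(\<And>k. k \<in> {1..d} \<Longrightarrow> (f (\<sigma> k) = 0 \<longleftrightarrow> g (\<sigma> k) = 0)) \<Longrightarrow> lv d \<sigma> f = lv d \<sigma> g"
  unfolding lv_def by (rule arg_cong[where f=Max]) auto

lemma lv_zero_fun: "lv d \<sigma> (\<lambda>_. 0) = 0"
  unfolding lv_def by simp

lemma lc_zero_fun: "lc d \<sigma> (\<lambda>_. 0) = 0"
  unfolding lc_def by (simp add: lv_zero_fun)

lemma lv_smult: "b \<noteq> 0 \<Longrightarrow> lv d \<sigma> (smult_lp b g) = lv d \<sigma> g"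
  by (rule lv_cong) (simp add: smult_lp_def)

lemma var_order_surj: "var_order d \<sigma> \<Longrightarrow> i \<in> {1..d} \<Longrightarrow> \<exists>k\<in>{1..d}. \<sigma> k = i"
  unfolding var_order_def bij_betw_def by (metis imageE)

lemma lv0_const: "var_order d \<sigma> \<Longrightarrow> in_vars d h \<Longrightarrow> lv d \<sigma> h = 0 \<Longrightarrow> 0 < i \<Longrightarrow> h i = 0"
proof -
  assume vo: "var_order d \<sigma>" and iv: "in_vars d h" and l: "lv d \<sigma> h = 0" and i: "0 < i"
  show "h i = 0"
  proof (cases "i \<le> d")
    case True
    then have "i \<in> {1..d}" using i by auto
    then obtain k where k: "k \<in> {1..d}" "\<sigma> k = i" using var_order_surj[OF vo] by blast
    have "h (\<sigma> k) = 0" using lv_zero_above[of k d \<sigma> h] k(1) l by simp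
    then show ?thesis using k(2) by simp
  next
    case False then show ?thesis using iv by (simp add: in_vars_def)
  qed
qed

lemma lc_nonzero:
  assumes vo: "var_order d \<sigma>" and iv: "in_vars d h" and nz: "h \<noteq> (\<lambda>_. 0)"
  shows "lc d \<sigma> h \<noteq> 0"
proof (cases "lv d \<sigma> h = 0")
  case True
  show ?thesis
  proof
    assume "lc d \<sigma> h = 0"
    then have "h 0 = 0" using True by (simp add: lc_def)
    then have "h = (\<lambda>_. 0)"
    proof -
      assume h0: "h 0 = 0"
      show ?thesis
      proof
        fix i show "h i = 0" using lv0_const[OF vo iv True, of i] h0 by (cases "i = 0") auto
      qed
    qed
    then show False using nz by simp
  qed
next
  case False then show ?thesis using lv_pos[of d \<sigma> h] by (simp add: lc_def)
qed

lemma lc_coeff: "\<exists>i. lc d \<sigma> h = h i"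
proof (cases "lv d \<sigma> h = 0")
  case True then show ?thesis unfolding lc_def by (intro exI[of _ 0]) simp
next
  case False then show ?thesis unfolding lc_def by (intro exI[of _ "\<sigma> (lv d \<sigma> h)"]) simp
qed

lemma in_vars_spoly: "in_vars d g \<Longrightarrow> in_vars d h \<Longrightarrow> in_vars d (spoly d \<sigma> g h)"
  by (simp add: in_vars_def spoly_def)

lemma in_vars_smult: "in_vars d g \<Longrightarrow> in_vars d (smult_lp b g)"
  by (simp add: in_vars_def smult_lp_def)

lemma spoly_zero_right: "spoly d \<sigma> g (\<lambda>_. 0) = (\<lambda>_. 0)"
  by (simp add: spoly_def lc_zero_fun)

definition rk :: "nat \<Rightarrow> (nat \<Rightarrow> nat) \<Rightarrow> lpoly \<Rightarrow> nat" where
  "rk d \<sigma> h = (if h = (\<lambda>_. 0) then 0 else Suc (lv d \<sigma> h))"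

lemma rk_le: "rk d \<sigma> h \<le> Suc d"
  using lv_le[of d \<sigma> h] by (simp add: rk_def)

lemma spoly_lv0:
  assumes vo: "var_order d \<sigma>" and ivg: "in_vars d g" and ivh: "in_vars d h"
    and l: "lv d \<sigma> g = 0" "lv d \<sigma> h = 0"
  shows "spoly d \<sigma> g h = (\<lambda>_. 0)"
proof
  fix i show "spoly d \<sigma> g h i = 0"
  proof (cases "i = 0")
    case True then show ?thesis using l by (simp add: spoly_def lc_def)
  next
    case False then show ?thesis
      using lv0_const[OF vo ivg l(1)] lv0_const[OF vo ivh l(2)] by (simp add: spoly_def)
  qed
qed

lemma spoly_lv_less:
  assumes l: "lv d \<sigma> g = lv d \<sigma> h" "0 < lv d \<sigma> h"
  shows "lv d \<sigma> (spoly d \<sigma> g h) < lv d \<sigma> h"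
proof -
  let ?k = "lv d \<sigma> h"
  have "lv d \<sigma> (spoly d \<sigma> g h) \<le> ?k - 1"
    unfolding lv_le_iff
  proof (intro ballI impI)
    fix j assume j: "j \<in> {1..d}" "?k - 1 < j"
    show "spoly d \<sigma> g h (\<sigma> j) = 0"
    proof (cases "j = ?k")
      case True then show ?thesis using l by (simp add: spoly_def lc_def)
    next
      case False
      then have "?k < j" using j by auto
      then show ?thesis using lv_zero_above[OF j(1), of \<sigma> g] lv_zero_above[OF j(1), of \<sigma> h] l
        by (simp add: spoly_def)
    qed
  qed
  then show ?thesis using l by linarith
qed

lemma spoly_rk:
  assumes vo: "var_order d \<sigma>" and ivg: "in_vars d g" and ivh: "in_vars d h"
    and l: "lv d \<sigma> g = lv d \<sigma> h" and nz: "h \<noteq> (\<lambda>_. 0)"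
  shows "rk d \<sigma> (spoly d \<sigma> g h) < rk d \<sigma> h"
proof (cases "lv d \<sigma> h = 0")
  case True
  then have "spoly d \<sigma> g h = (\<lambda>_. 0)" using spoly_lv0[OF vo ivg ivh] l by simp
  then show ?thesis using nz by (simp add: rk_def)
next
  case False
  then show ?thesis using spoly_lv_less[OF l] nz by (simp add: rk_def)
qed

lemma sys_props:
  assumes "is_system d \<Phi>" "(f, g) \<in> set \<Phi>"
  shows "f \<noteq> (\<lambda>_. 0)" "in_vars d f" "in_vars d g"
  using assms unfolding is_system_def by auto

lemma terms_in_vars: "is_system d \<Phi> \<Longrightarrow> h \<in> terms \<Phi> \<Longrightarrow> in_vars d h"
  unfolding terms_def is_system_def by auto

lemma finite_terms: "finite (terms \<Phi>)"
  unfolding terms_def by simp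

lemma card_terms: "card (terms \<Phi>) \<le> 2 * length \<Phi>"
proof -
  have "card (terms \<Phi>) \<le> card (fst ` set \<Phi>) + card (snd ` set \<Phi>)"
    unfolding terms_def by (rule card_Un_le)
  also have "\<dots> \<le> card (set \<Phi>) + card (set \<Phi>)"
    by (intro add_mono card_image_le) auto
  also have "\<dots> \<le> 2 * length \<Phi>" using card_length[of \<Phi>] by simp
  finally show ?thesis .
qed

lemma card_lhs: "card (lhs \<Phi>) \<le> length \<Phi>"
  unfolding lhs_def by (metis card_image_le card_length finite_set le_trans)

lemma lhs_terms: "lhs \<Phi> \<subseteq> terms \<Phi>"
  unfolding lhs_def terms_def by auto

lemma rhs_terms: "(f, g) \<in> set \<Phi> \<Longrightarrow> g \<in> terms \<Phi>"
  unfolding terms_def by force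

lemma lhs_terms': "(f, g) \<in> set \<Phi> \<Longrightarrow> f \<in> terms \<Phi>"
  unfolding terms_def by force

lemma smult_lp_0: "smult_lp 0 g = (\<lambda>_. 0)"
  by (simp add: smult_lp_def)

lemma smult_lp_1: "smult_lp 1 g = g"
  by (simp add: smult_lp_def)

lemma Mmod_zero: "(\<lambda>_. 0) \<in> Mmod \<Phi> f"
  using Mmod.smul[OF Mmod.gen, where b=0] by (simp add: smult_lp_0)

lemma Mmod_rhs: "(f, g) \<in> set \<Phi> \<Longrightarrow> g \<in> Mmod \<Phi> f"
  using Mmod.dvd[where g=f and h=g and b=1 and \<Phi>=\<Phi> and f=f] Mmod.gen[where \<Phi>=\<Phi> and f=f] by (simp add: smult_lp_1)

lemma Mmod_lin: "g \<in> Mmod \<Phi> f \<Longrightarrow> h \<in> Mmod \<Phi> f \<Longrightarrow> (\<lambda>i. a * g i + b * h i) \<in> Mmod \<Phi> f"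
  using Mmod.add[OF Mmod.smul[where g=g and b=a] Mmod.smul[where g=h and b=b]] by (simp add: smult_lp_def)

lemma Mmod_spoly: "g \<in> Mmod \<Phi> f \<Longrightarrow> h \<in> Mmod \<Phi> f \<Longrightarrow> spoly d \<sigma> g h \<in> Mmod \<Phi> f"
  using Mmod_lin[of g \<Phi> f h "lc d \<sigma> h" "- lc d \<sigma> g"] by (simp add: spoly_def)

lemma span_sub_Mmod:
  assumes "finite G" "G \<subseteq> Mmod \<Phi> f"
  shows "span_Z G \<subseteq> Mmod \<Phi> f"
proof
  fix h assume "h \<in> span_Z G"
  then obtain c where h: "h = (\<lambda>i. \<Sum>g\<in>G. c g * g i)" unfolding span_Z_def by blast
  have "(\<lambda>i. \<Sum>g\<in>G. c g * g i) \<in> Mmod \<Phi> f" using assms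
  proof (induction G rule: finite_induct)
    case empty then show ?case using Mmod_zero by simp
  next
    case (insert x G)
    have "(\<lambda>i. c x * x i + 1 * (\<Sum>g\<in>G. c g * g i)) \<in> Mmod \<Phi> f"
      using insert by (intro Mmod_lin) auto
    then show ?case using insert by simp
  qed
  then show "h \<in> Mmod \<Phi> f" using h by simp
qed

lemma in_span: "finite G \<Longrightarrow> g \<in> G \<Longrightarrow> g \<in> span_Z G"
  unfolding span_Z_def
proof (intro CollectI exI[of _ "\<lambda>x. if x = g then 1 else 0"] ext)
  fix i assume "finite G" "g \<in> G"
  then have "(\<Sum>x\<in>G. (if x = g then 1 else 0) * x i) = (\<Sum>x\<in>G. if x = g then g i else 0)"
    by (intro sum.cong) auto
  also have "\<dots> = g i" using \<open>finite G\<close> \<open>g \<in> G\<close> by (simp add: sum.delta)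
  finally show "g i = (\<Sum>x\<in>G. (if x = g then 1 else 0) * x i)" by simp
qed

lemma span_lv:
  assumes "\<forall>g\<in>G. lv d \<sigma> g \<le> k" "h \<in> span_Z G"
  shows "lv d \<sigma> h \<le> k"
proof -
  obtain c where h: "h = (\<lambda>i. \<Sum>g\<in>G. c g * g i)" using assms(2) unfolding span_Z_def by blast
  show ?thesis unfolding lv_le_iff
  proof (intro ballI impI)
    fix j assume j: "j \<in> {1..d}" "k < j"
    have "\<forall>g\<in>G. g (\<sigma> j) = 0" using assms(1) j lv_zero_above[OF j(1), of \<sigma>] by force
    then have "(\<Sum>g\<in>G. c g * g (\<sigma> j)) = 0" by (intro sum.neutral) simp
    then show "h (\<sigma> j) = 0" using h by simp
  qed
qed

lemma Delta_in_vars: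
  assumes sys: "is_system d \<Phi>" and x: "x \<in> Delta d \<sigma> \<Phi> f"
  shows "in_vars d x"
  using x
proof (induction rule: Delta.induct)
  case (base h) then show ?case using terms_in_vars[OF sys] by blast
next
  case (step g h) then show ?case using sys_props[OF sys step(1)] in_vars_spoly by blast
qed

lemma Delta_no_rhs:
  assumes "\<forall>g. (f, g) \<notin> set \<Phi>"
  shows "Delta d \<sigma> \<Phi> f \<subseteq> terms \<Phi>"
proof
  fix x assume "x \<in> Delta d \<sigma> \<Phi> f" then show "x \<in> terms \<Phi>"
    by (induction rule: Delta.induct) (use assms in auto)
qed

lemma terms_sub_Delta: "terms \<Phi> \<subseteq> Delta d \<sigma> \<Phi> f"
  by (auto intro: Delta.base)

definition GG :: "nat \<Rightarrow> (nat \<Rightarrow> nat) \<Rightarrow> dsystem \<Rightarrow> lpoly \<Rightarrow> nat \<Rightarrow> lpoly set" where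
  "GG d \<sigma> \<Phi> f k = {g. lv d \<sigma> g \<le> k \<and> (f, g) \<in> set \<Phi>}"

definition EL :: "nat \<Rightarrow> (nat \<Rightarrow> nat) \<Rightarrow> dsystem \<Rightarrow> lpoly \<Rightarrow> bool" where
  "EL d \<sigma> \<Phi> f \<longleftrightarrow> (\<forall>k\<le>d. lin_indep_Z (GG d \<sigma> \<Phi> f k) \<and>
      span_Z (GG d \<sigma> \<Phi> f k) = Mmod \<Phi> f \<inter> lower_polys d \<sigma> k)"

lemma EL_of_elim:
  "elimination_property d \<sigma> \<Phi> \<Longrightarrow> f \<in> prim_part ` lhs \<Phi> \<Longrightarrow> EL d \<sigma> \<Phi> f"
  unfolding elimination_property_def EL_def GG_def Let_def by blast

lemma GG_finite: "finite (GG d \<sigma> \<Phi> f k)"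
proof -
  have "GG d \<sigma> \<Phi> f k \<subseteq> snd ` set \<Phi>" unfolding GG_def by force
  then show ?thesis by (rule finite_subset) simp
qed

lemma lin_indep_nz: "lin_indep_Z G \<Longrightarrow> (\<lambda>_. 0) \<notin> G"
proof
  assume li: "lin_indep_Z G" and z: "(\<lambda>_. 0) \<in> G"
  let ?c = "\<lambda>x. if x = (\<lambda>_. 0::int) then 1::int else 0"
  have "\<forall>i. (\<Sum>g\<in>G. ?c g * g i) = 0"
    by (intro allI sum.neutral) auto
  then have "\<forall>g\<in>G. ?c g = 0" using spec[OF conjunct2[OF li[unfolded lin_indep_Z_def]], of ?c] by blast
  then show False using z by force
qed

lemma EL_nz:
  assumes "EL d \<sigma> \<Phi> f" "(f, g) \<in> set \<Phi>"
  shows "g \<noteq> (\<lambda>_. 0)"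
proof -
  have "lin_indep_Z (GG d \<sigma> \<Phi> f d)" using assms(1) unfolding EL_def by blast
  moreover have "g \<in> GG d \<sigma> \<Phi> f d" using assms(2) lv_le unfolding GG_def by blast
  ultimately show ?thesis using lin_indep_nz by force
qed

lemma EL_unique:
  assumes sys: "is_system d \<Phi>" and vo: "var_order d \<sigma>" and el: "EL d \<sigma> \<Phi> f"
    and g: "(f, g) \<in> set \<Phi>" and g': "(f, g') \<in> set \<Phi>" and l: "lv d \<sigma> g = lv d \<sigma> g'"
  shows "g = g'"
proof (rule ccontr)
  assume ne: "g \<noteq> g'"
  define k where "k = lv d \<sigma> g"
  have kd: "k \<le> d" unfolding k_def by (rule lv_le)
  define G where "G = GG d \<sigma> \<Phi> f k"
  have li: "lin_indep_Z G" using el kd unfolding EL_def G_def by blast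
  have finG: "finite G" unfolding G_def by (rule GG_finite)
  have gG: "g \<in> G" "g' \<in> G" using g g' l unfolding G_def GG_def k_def by auto
  have ivg: "in_vars d g" "in_vars d g'" using sys_props[OF sys g] sys_props[OF sys g'] by auto
  define s where "s = spoly d \<sigma> g g'"
  have sM: "s \<in> Mmod \<Phi> f" unfolding s_def using Mmod_rhs[OF g] Mmod_rhs[OF g'] by (rule Mmod_spoly)
  define A where "A = {x \<in> G. lv d \<sigma> x < k}"
  have finA: "finite A" using finG unfolding A_def by simp
  have "\<exists>c. s = (\<lambda>i. \<Sum>x\<in>A. c x * x i)"
  proof (cases "k = 0")
    case True
    then have "s = (\<lambda>_. 0)" unfolding s_def using spoly_lv0[OF vo ivg] l k_def by simp
    moreover have "A = {}" using True unfolding A_def by simp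
    ultimately show ?thesis by simp
  next
    case False
    have "lv d \<sigma> s < k" unfolding s_def k_def using spoly_lv_less[of d \<sigma> g g'] l False k_def by simp
    then have "s \<in> Mmod \<Phi> f \<inter> lower_polys d \<sigma> (k - 1)"
      using sM in_vars_spoly[OF ivg] unfolding lower_polys_def s_def by auto
    also have "\<dots> = span_Z (GG d \<sigma> \<Phi> f (k - 1))" using el kd unfolding EL_def by auto
    also have "GG d \<sigma> \<Phi> f (k - 1) = A" unfolding A_def G_def GG_def using False by auto
    finally show ?thesis unfolding span_Z_def by blast
  qed
  then obtain c where c: "s = (\<lambda>i. \<Sum>x\<in>A. c x * x i)" by blast
  define c' where "c' x = (if x = g then lc d \<sigma> g' else if x = g' then - lc d \<sigma> g
      else if x \<in> A then - c x else 0)" for x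
  have gA: "g \<notin> A" "g' \<notin> A" using l unfolding A_def k_def by auto
  have sub: "insert g (insert g' A) \<subseteq> G" using gG unfolding A_def by auto
  have "\<forall>i. (\<Sum>x\<in>G. c' x * x i) = 0"
  proof
    fix i
    have "(\<Sum>x\<in>G. c' x * x i) = (\<Sum>x\<in>insert g (insert g' A). c' x * x i)"
      by (rule sum.mono_neutral_right[OF finG sub]) (auto simp: c'_def)
    also have "\<dots> = c' g * g i + (c' g' * g' i + (\<Sum>x\<in>A. c' x * x i))"
      using finA gA ne by simp
    also have "(\<Sum>x\<in>A. c' x * x i) = (\<Sum>x\<in>A. - (c x * x i))"
      by (rule sum.cong) (use gA in \<open>auto simp: c'_def\<close>)
    also have "\<dots> = - s i" using c by (simp add: sum_negf)
    finally show "(\<Sum>x\<in>G. c' x * x i) = 0" using ne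
      by (simp add: c'_def s_def spoly_def)
  qed
  then have "c' g = 0" using li gG unfolding lin_indep_Z_def by blast
  then have "lc d \<sigma> g' = 0" by (simp add: c'_def)
  moreover have "g' \<noteq> (\<lambda>_. 0)" using EL_nz[OF el g'] .
  ultimately show False using lc_nonzero[OF vo ivg(2)] by simp
qed

definition st :: "nat \<Rightarrow> (nat \<Rightarrow> nat) \<Rightarrow> dsystem \<Rightarrow> lpoly \<Rightarrow> lpoly \<Rightarrow> lpoly" where
  "st d \<sigma> \<Phi> f h = (if \<exists>g. (f, g) \<in> set \<Phi> \<and> lv d \<sigma> g = lv d \<sigma> h
     then spoly d \<sigma> (SOME g. (f, g) \<in> set \<Phi> \<and> lv d \<sigma> g = lv d \<sigma> h) h else h)"

lemma st_prop:
  assumes sys: "is_system d \<Phi>" and vo: "var_order d \<sigma>" and iv: "in_vars d h"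
  shows "in_vars d (st d \<sigma> \<Phi> f h) \<and> (st d \<sigma> \<Phi> f h = h \<or> rk d \<sigma> (st d \<sigma> \<Phi> f h) < rk d \<sigma> h)"
proof (cases "\<exists>g. (f, g) \<in> set \<Phi> \<and> lv d \<sigma> g = lv d \<sigma> h")
  case True
  define g0 where "g0 = (SOME g. (f, g) \<in> set \<Phi> \<and> lv d \<sigma> g = lv d \<sigma> h)"
  have g0: "(f, g0) \<in> set \<Phi>" "lv d \<sigma> g0 = lv d \<sigma> h"
    using someI_ex[OF True] unfolding g0_def by auto
  have st: "st d \<sigma> \<Phi> f h = spoly d \<sigma> g0 h" using True unfolding st_def g0_def by simp
  have ivg: "in_vars d g0" using sys_props[OF sys g0(1)] by simp
  show ?thesis
  proof (cases "h = (\<lambda>_. 0)")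
    case True then show ?thesis using st by (simp add: spoly_zero_right in_vars_def)
  next
    case False then show ?thesis using st spoly_rk[OF vo ivg iv g0(2)] in_vars_spoly[OF ivg iv] by simp
  qed
next
  case False
  then have "st d \<sigma> \<Phi> f h = h" unfolding st_def by (simp only: if_False)
  then show ?thesis using iv by simp
qed

lemma st_iter_bound:
  assumes sys: "is_system d \<Phi>" and vo: "var_order d \<sigma>"
  shows "in_vars d t \<Longrightarrow> \<exists>i\<le>rk d \<sigma> t. (st d \<sigma> \<Phi> f ^^ n) t = (st d \<sigma> \<Phi> f ^^ i) t"
proof (induction "rk d \<sigma> t" arbitrary: t n rule: less_induct)
  case less
  let ?s = "st d \<sigma> \<Phi> f"
  show ?case
  proof (cases n)
    case 0 then show ?thesis by (intro exI[of _ 0]) simp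
  next
    case (Suc n')
    have sp: "in_vars d (?s t)" "?s t = t \<or> rk d \<sigma> (?s t) < rk d \<sigma> t"
      using st_prop[OF sys vo less.prems, of f] by auto
    show ?thesis
    proof (cases "?s t = t")
      case True
      have "(?s ^^ j) t = t" for j by (induction j) (use True in auto)
      then show ?thesis by (intro exI[of _ 0]) simp
    next
      case False
      then have lt: "rk d \<sigma> (?s t) < rk d \<sigma> t" using sp by simp
      obtain i where i: "i \<le> rk d \<sigma> (?s t)" "(?s ^^ n') (?s t) = (?s ^^ i) (?s t)"
        using less.hyps[OF lt sp(1)] by blast
      have "(?s ^^ n) t = (?s ^^ n') (?s t)" by (simp only: Suc funpow_Suc_right comp_def)
      also have "\<dots> = (?s ^^ Suc i) t" using i(2) by (simp only: funpow_Suc_right comp_def)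
      finally show ?thesis using i(1) lt by (intro exI[of _ "Suc i"]) simp
    qed
  qed
qed

lemma Delta_iter:
  assumes sys: "is_system d \<Phi>" and vo: "var_order d \<sigma>" and el: "EL d \<sigma> \<Phi> f"
    and x: "x \<in> Delta d \<sigma> \<Phi> f"
  shows "\<exists>t\<in>terms \<Phi>. \<exists>n. x = (st d \<sigma> \<Phi> f ^^ n) t"
  using x
proof (induction rule: Delta.induct)
  case (base h) then show ?case by (intro bexI[of _ h] exI[of _ 0]) auto
next
  case (step g h)
  then obtain t n where t: "t \<in> terms \<Phi>" "h = (st d \<sigma> \<Phi> f ^^ n) t" by blast
  have ex: "\<exists>g. (f, g) \<in> set \<Phi> \<and> lv d \<sigma> g = lv d \<sigma> h" using step by blast
  define g0 where "g0 = (SOME g. (f, g) \<in> set \<Phi> \<and> lv d \<sigma> g = lv d \<sigma> h)"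
  have g0: "(f, g0) \<in> set \<Phi>" "lv d \<sigma> g0 = lv d \<sigma> h"
    using someI_ex[OF ex] unfolding g0_def by auto
  have "g0 = g" using EL_unique[OF sys vo el g0(1) step(1)] g0(2) step(3) by simp
  then have "st d \<sigma> \<Phi> f h = spoly d \<sigma> g h" using ex unfolding st_def g0_def by simp
  then have "spoly d \<sigma> g h = (st d \<sigma> \<Phi> f ^^ Suc n) t" using t by simp
  then show ?case using t(1) by blast
qed

lemma Delta_sub_iter:
  assumes sys: "is_system d \<Phi>" and vo: "var_order d \<sigma>" and el: "EL d \<sigma> \<Phi> f"
  shows "Delta d \<sigma> \<Phi> f \<subseteq> (\<lambda>(t, i). (st d \<sigma> \<Phi> f ^^ i) t) ` (terms \<Phi> \<times> {..Suc d})"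
proof
  fix x assume "x \<in> Delta d \<sigma> \<Phi> f"
  then obtain t n where t: "t \<in> terms \<Phi>" "x = (st d \<sigma> \<Phi> f ^^ n) t"
    using Delta_iter[OF sys vo el] by blast
  obtain i where i: "i \<le> rk d \<sigma> t" "(st d \<sigma> \<Phi> f ^^ n) t = (st d \<sigma> \<Phi> f ^^ i) t"
    using st_iter_bound[OF sys vo terms_in_vars[OF sys t(1)]] by blast
  have "i \<le> Suc d" using i(1) rk_le[of d \<sigma> t] by simp
  then show "x \<in> (\<lambda>(t, i). (st d \<sigma> \<Phi> f ^^ i) t) ` (terms \<Phi> \<times> {..Suc d})"
    using t i by force
qed

lemma Delta_card:
  assumes sys: "is_system d \<Phi>" and vo: "var_order d \<sigma>" and el: "EL d \<sigma> \<Phi> f"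
  shows "finite (Delta d \<sigma> \<Phi> f) \<and> card (Delta d \<sigma> \<Phi> f) \<le> 2 * length \<Phi> * (d + 2)"
proof -
  let ?I = "(\<lambda>(t, i). (st d \<sigma> \<Phi> f ^^ i) t) ` (terms \<Phi> \<times> {..Suc d})"
  have fin: "finite ?I" using finite_terms by simp
  have "card ?I \<le> card (terms \<Phi> \<times> {..Suc d})" by (rule card_image_le) (simp add: finite_terms)
  also have "\<dots> = card (terms \<Phi>) * (d + 2)" by (simp add: card_cartesian_product)
  also have "\<dots> \<le> 2 * length \<Phi> * (d + 2)" by (rule mult_le_mono1[OF card_terms])
  finally show ?thesis using Delta_sub_iter[OF sys vo el] fin
    by (meson card_mono finite_subset le_trans)
qed

lemma gcd_scale: "Gcd (range (\<lambda>i. k * q i)) = \<bar>k\<bar> * Gcd (range (q :: nat \<Rightarrow> int))"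
proof -
  have "range (\<lambda>i. k * q i) = (*) k ` range q" by auto
  then show ?thesis by (simp add: Gcd_mult abs_mult)
qed

lemma pgcd_nonneg: "0 \<le> pgcd f" unfolding pgcd_def by simp

lemma pgcd_dvd: "pgcd f dvd f i" unfolding pgcd_def by (rule Gcd_dvd) simp

lemma pgcd_zero_iff: "pgcd f = 0 \<longleftrightarrow> f = (\<lambda>_. 0)"
  unfolding pgcd_def by (auto simp: Gcd_0_iff)

lemma prim_part_split: "f i = pgcd f * prim_part f i"
  unfolding prim_part_def using pgcd_dvd[of f i] by simp

lemma prim_part_primitive: "primitive f \<Longrightarrow> prim_part f = f"
  unfolding primitive_def prim_part_def by simp

lemma primitive_prim_part:
  assumes "h \<noteq> (\<lambda>_. 0)"
  shows "primitive (prim_part h)"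
proof -
  have G: "pgcd h \<noteq> 0" using assms pgcd_zero_iff by blast
  have eqh: "(\<lambda>i. pgcd h * prim_part h i) = h" by (rule ext, rule prim_part_split[symmetric])
  have "pgcd h = Gcd (range (\<lambda>i. pgcd h * prim_part h i))"
    by (subst eqh) (simp add: pgcd_def)
  also have "\<dots> = pgcd h * pgcd (prim_part h)"
    using pgcd_nonneg[of h] by (simp add: gcd_scale pgcd_def[of "prim_part h"])
  finally have "pgcd (prim_part h) = 1" using G by simp
  moreover have "prim_part h \<noteq> (\<lambda>_. 0)"
  proof
    assume "prim_part h = (\<lambda>_. 0)"
    then have "h = (\<lambda>_. 0)" using eqh by simp
    then show False using assms by simp
  qed
  ultimately show ?thesis unfolding primitive_def by simp
qed

lemma prim_part_multiple:
  assumes f: "primitive f" and g: "g \<noteq> (\<lambda>_. 0)" and b: "b \<noteq> 0"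
    and eq: "smult_lp b g = smult_lp c f"
  shows "prim_part g = f \<or> prim_part g = (\<lambda>i. - f i)"
proof -
  let ?G = "pgcd g"
  have G: "?G > 0" using g pgcd_zero_iff pgcd_nonneg by (metis less_le)
  have e: "b * ?G * prim_part g i = c * f i" for i
    using fun_cong[OF eq, of i] prim_part_split[of g i] by (simp add: smult_lp_def mult.assoc)
  have "(\<lambda>i. (b * ?G) * prim_part g i) = (\<lambda>i. c * f i)" using e by (intro ext) simp
  then have "Gcd (range (\<lambda>i. (b * ?G) * prim_part g i)) = Gcd (range (\<lambda>i. c * f i))"
    by (rule arg_cong[where f = "\<lambda>q::nat\<Rightarrow>int. Gcd (range q)"])
  then have "\<bar>b * ?G\<bar> = \<bar>c\<bar>"
    using primitive_prim_part[OF g] f unfolding primitive_def pgcd_def by (simp add: gcd_scale)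
  then have "b * ?G = c \<or> b * ?G = - c" by arith
  moreover have "b * ?G \<noteq> 0" using b G by simp
  ultimately show ?thesis
  proof (elim disjE)
    assume c: "b * ?G = c" "b * ?G \<noteq> 0"
    have "prim_part g i = f i" for i using e[of i] c by simp
    then show ?thesis by auto
  next
    assume c: "b * ?G = - c" "b * ?G \<noteq> 0"
    have "prim_part g i = - f i" for i
    proof -
      have "(b * ?G) * (prim_part g i + f i) = 0" using e[of i] c(1) by (simp add: algebra_simps)
      then show ?thesis using c(2) by simp
    qed
    then show ?thesis by auto
  qed
qed

lemma ml_le:
  assumes "smult_lp a g \<in> Mmod \<Phi> f" "a \<noteq> 0"
  shows "min_lambda \<Phi> f g \<le> nat \<bar>a\<bar>"
  unfolding min_lambda_def
proof (rule Least_le)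
  show "0 < nat \<bar>a\<bar> \<and> (smult_lp (int (nat \<bar>a\<bar>)) g \<in> Mmod \<Phi> f \<or> smult_lp (- int (nat \<bar>a\<bar>)) g \<in> Mmod \<Phi> f)"
    using assms by (cases "a > 0") auto
qed

lemma ml_props:
  assumes "smult_lp a g \<in> Mmod \<Phi> f" "a \<noteq> 0"
  shows "\<exists>a'. a' \<noteq> 0 \<and> \<bar>a'\<bar> = int (min_lambda \<Phi> f g) \<and> smult_lp a' g \<in> Mmod \<Phi> f"
proof -
  let ?P = "\<lambda>n::nat. n > 0 \<and> (smult_lp (int n) g \<in> Mmod \<Phi> f \<or> smult_lp (- int n) g \<in> Mmod \<Phi> f)"
  have "?P (nat \<bar>a\<bar>)" using assms by (cases "a > 0") auto
  then have "?P (min_lambda \<Phi> f g)" unfolding min_lambda_def by (rule LeastI)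
  then have pos: "min_lambda \<Phi> f g > 0" and
    d: "smult_lp (int (min_lambda \<Phi> f g)) g \<in> Mmod \<Phi> f \<or> smult_lp (- int (min_lambda \<Phi> f g)) g \<in> Mmod \<Phi> f"
    by auto
  from d show ?thesis
  proof
    assume "smult_lp (int (min_lambda \<Phi> f g)) g \<in> Mmod \<Phi> f"
    then show ?thesis using pos by (intro exI[of _ "int (min_lambda \<Phi> f g)"]) simp
  next
    assume "smult_lp (- int (min_lambda \<Phi> f g)) g \<in> Mmod \<Phi> f"
    then show ?thesis using pos by (intro exI[of _ "- int (min_lambda \<Phi> f g)"]) simp
  qed
qed

lemma Mmod_sub: "f' \<in> Mmod \<Phi> f \<Longrightarrow> Mmod \<Phi> f' \<subseteq> Mmod \<Phi> f"
proof
  fix x assume f': "f' \<in> Mmod \<Phi> f" and x: "x \<in> Mmod \<Phi> f'"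
  from x show "x \<in> Mmod \<Phi> f"
    by (induction rule: Mmod.induct) (auto intro: Mmod.intros f')
qed

lemma Mmod_neg: "Mmod \<Phi> (\<lambda>i. - f i) = Mmod \<Phi> f"
proof
  have "(\<lambda>i. - f i) = smult_lp (-1) f" by (simp add: smult_lp_def)
  then have "(\<lambda>i. - f i) \<in> Mmod \<Phi> f" using Mmod.smul[OF Mmod.gen] by metis
  then show "Mmod \<Phi> (\<lambda>i. - f i) \<subseteq> Mmod \<Phi> f" by (rule Mmod_sub)
  have "f = smult_lp (-1) (\<lambda>i. - f i)" by (simp add: smult_lp_def)
  then have "f \<in> Mmod \<Phi> (\<lambda>i. - f i)" using Mmod.smul[OF Mmod.gen] by metis
  then show "Mmod \<Phi> f \<subseteq> Mmod \<Phi> (\<lambda>i. - f i)" by (rule Mmod_sub)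
qed

lemma lc_bound: "(\<forall>i. \<bar>h i\<bar> \<le> B) \<Longrightarrow> \<bar>lc d \<sigma> h\<bar> \<le> B"
  using lc_coeff[of d \<sigma> h] by auto

lemma span_empty: "span_Z {} = {\<lambda>_. 0}"
  unfolding span_Z_def by simp

lemma smult_zero_iff: "a \<noteq> 0 \<Longrightarrow> smult_lp a g = (\<lambda>_. 0) \<longleftrightarrow> g = (\<lambda>_. 0)"
  unfolding smult_lp_def by (auto simp: fun_eq_iff)

lemma lam_bound:
  assumes sys: "is_system d \<Phi>" and vo: "var_order d \<sigma>" and el: "EL d \<sigma> \<Phi> f"
    and Nb: "\<forall>t\<in>terms \<Phi>. \<forall>i. \<bar>t i\<bar> \<le> int N" and N1: "1 \<le> N"
  shows "g \<in> Delta d \<sigma> \<Phi> f \<Longrightarrow> lam \<noteq> 0 \<Longrightarrow> smult_lp lam g \<in> Mmod \<Phi> f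
         \<Longrightarrow> min_lambda \<Phi> f g \<le> N ^ rk d \<sigma> g"
proof (induction "rk d \<sigma> g" arbitrary: g lam rule: less_induct)
  case less
  note gD = less.prems(1) and lam = less.prems(2) and gM = less.prems(3)
  show ?case
  proof (cases "g = (\<lambda>_. 0)")
    case True
    have "smult_lp 1 g \<in> Mmod \<Phi> f" using True Mmod_zero by (simp add: smult_lp_1)
    then have "min_lambda \<Phi> f g \<le> 1" using ml_le[of 1 g \<Phi> f] by simp
    then show ?thesis using True by (simp add: rk_def)
  next
    case False
    have iv: "in_vars d g" using Delta_in_vars[OF sys gD] .
    define k where "k = lv d \<sigma> g"
    have kd: "k \<le> d" unfolding k_def by (rule lv_le)
    show ?thesis
    proof (cases "\<exists>gk. (f, gk) \<in> set \<Phi> \<and> lv d \<sigma> gk = k")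
      case True
      then obtain gk where gk: "(f, gk) \<in> set \<Phi>" "lv d \<sigma> gk = lv d \<sigma> g" unfolding k_def by blast
      have ivk: "in_vars d gk" using sys_props[OF sys gk(1)] by simp
      define s where "s = spoly d \<sigma> gk g"
      have sD: "s \<in> Delta d \<sigma> \<Phi> f" unfolding s_def by (rule Delta.step[OF gk(1) gD gk(2)])
      have rs: "rk d \<sigma> s < rk d \<sigma> g" unfolding s_def by (rule spoly_rk[OF vo ivk iv gk(2) False])
      have gkM: "gk \<in> Mmod \<Phi> f" by (rule Mmod_rhs[OF gk(1)])
      have "(\<lambda>i. (lam * lc d \<sigma> g) * gk i + (- lc d \<sigma> gk) * smult_lp lam g i) \<in> Mmod \<Phi> f"
        by (rule Mmod_lin[OF gkM gM])
      moreover have "(\<lambda>i. (lam * lc d \<sigma> g) * gk i + (- lc d \<sigma> gk) * smult_lp lam g i) = smult_lp lam s"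
        unfolding s_def spoly_def smult_lp_def by (auto simp: algebra_simps)
      ultimately have sM: "smult_lp lam s \<in> Mmod \<Phi> f" by simp
      have IH: "min_lambda \<Phi> f s \<le> N ^ rk d \<sigma> s" by (rule less.hyps[OF rs sD lam sM])
      obtain a where a: "a \<noteq> 0" "\<bar>a\<bar> = int (min_lambda \<Phi> f s)" "smult_lp a s \<in> Mmod \<Phi> f"
        using ml_props[OF sM lam] by blast
      have "(\<lambda>i. (a * lc d \<sigma> g) * gk i + (- 1) * smult_lp a s i) \<in> Mmod \<Phi> f"
        by (rule Mmod_lin[OF gkM a(3)])
      moreover have "(\<lambda>i. (a * lc d \<sigma> g) * gk i + (- 1) * smult_lp a s i) = smult_lp (a * lc d \<sigma> gk) g"
        unfolding s_def spoly_def smult_lp_def by (auto simp: algebra_simps)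
      ultimately have gM': "smult_lp (a * lc d \<sigma> gk) g \<in> Mmod \<Phi> f" by simp
      have lck: "lc d \<sigma> gk \<noteq> 0" using lc_nonzero[OF vo ivk EL_nz[OF el gk(1)]] .
      have lcb: "\<bar>lc d \<sigma> gk\<bar> \<le> int N" using lc_bound Nb rhs_terms[OF gk(1)] by blast
      have "min_lambda \<Phi> f g \<le> nat \<bar>a * lc d \<sigma> gk\<bar>"
        by (rule ml_le[OF gM']) (use a(1) lck in simp)
      also have "nat \<bar>a * lc d \<sigma> gk\<bar> = min_lambda \<Phi> f s * nat \<bar>lc d \<sigma> gk\<bar>"
        using a(2) by (simp add: abs_mult nat_mult_distrib)
      also have "\<dots> \<le> N ^ rk d \<sigma> s * N"
        using IH lcb by (intro mult_mono) auto
      also have "\<dots> = N ^ Suc (rk d \<sigma> s)" by simp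
      also have "\<dots> \<le> N ^ rk d \<sigma> g" using N1 rs by (intro power_increasing) auto
      finally show ?thesis .
    next
      case False
      have gl: "smult_lp lam g \<in> lower_polys d \<sigma> k"
        unfolding lower_polys_def using in_vars_smult[OF iv] lv_smult[OF lam] k_def by simp
      have span: "span_Z (GG d \<sigma> \<Phi> f k) = Mmod \<Phi> f \<inter> lower_polys d \<sigma> k"
        using el kd unfolding EL_def by blast
      show ?thesis
      proof (cases "k = 0")
        case True
        have "GG d \<sigma> \<Phi> f k = {}" using False True unfolding GG_def by auto
        then have "smult_lp lam g = (\<lambda>_. 0)" using span gM gl span_empty by auto
        then show ?thesis using smult_zero_iff[OF lam] \<open>g \<noteq> _\<close> by simp
      next
        case k0: False
        have "GG d \<sigma> \<Phi> f k = GG d \<sigma> \<Phi> f (k - 1)" using False k0 unfolding GG_def by force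
        moreover have "span_Z (GG d \<sigma> \<Phi> f (k - 1)) = Mmod \<Phi> f \<inter> lower_polys d \<sigma> (k - 1)"
          using el kd unfolding EL_def by auto
        ultimately have "smult_lp lam g \<in> lower_polys d \<sigma> (k - 1)" using span gM gl by auto
        then have "lv d \<sigma> g \<le> k - 1" unfolding lower_polys_def using lv_smult[OF lam] by simp
        then show ?thesis using k0 k_def by simp
      qed
    qed
  qed
qed

lemma Delta_coeff:
  fixes N :: int
  assumes sys: "is_system d \<Phi>" and vo: "var_order d \<sigma>"
    and Nb: "\<forall>t\<in>terms \<Phi>. \<forall>i. \<bar>t i\<bar> \<le> N" and N1: "1 \<le> N"
  shows "x \<in> Delta d \<sigma> \<Phi> f \<Longrightarrow> \<forall>i. \<bar>x i\<bar> \<le> N * (2 * N) ^ (Suc d - rk d \<sigma> x)"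
proof (induction rule: Delta.induct)
  case (base h)
  have "1 \<le> (2 * N) ^ (Suc d - rk d \<sigma> h)" using N1 by (intro one_le_power) simp
  then have "N * 1 \<le> N * (2 * N) ^ (Suc d - rk d \<sigma> h)" using N1 by (intro mult_left_mono) auto
  show ?case
  proof
    fix i
    have "\<bar>h i\<bar> \<le> N" using Nb base by blast
    then show "\<bar>h i\<bar> \<le> N * (2 * N) ^ (Suc d - rk d \<sigma> h)" using \<open>N * 1 \<le> _\<close> by simp
  qed
next
  case (step g h)
  have ivh: "in_vars d h" using Delta_in_vars[OF sys step(2)] .
  have ivg: "in_vars d g" using sys_props[OF sys step(1)] by simp
  show ?case
  proof (cases "h = (\<lambda>_. 0)")
    case True
    have "0 \<le> N * (2 * N) ^ (Suc d - rk d \<sigma> (spoly d \<sigma> g h))" using N1 by simp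
    then show ?thesis using True by (simp add: spoly_zero_right)
  next
    case False
    have rs: "rk d \<sigma> (spoly d \<sigma> g h) < rk d \<sigma> h" by (rule spoly_rk[OF vo ivg ivh step(3) False])
    have rh: "rk d \<sigma> h \<le> Suc d" by (rule rk_le)
    define e where "e = Suc d - rk d \<sigma> h"
    have ee: "Suc e \<le> Suc d - rk d \<sigma> (spoly d \<sigma> g h)" using rs rh unfolding e_def by linarith
    define C where "C = N * (2 * N) ^ e"
    have C: "\<forall>i. \<bar>h i\<bar> \<le> C" using step.IH unfolding C_def e_def .
    have lch: "\<bar>lc d \<sigma> h\<bar> \<le> C" by (rule lc_bound[OF C])
    have gb: "\<forall>i. \<bar>g i\<bar> \<le> N" using Nb rhs_terms[OF step(1)] by blast
    have lcg: "\<bar>lc d \<sigma> g\<bar> \<le> N" by (rule lc_bound[OF gb])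
    have C0: "0 \<le> C" using N1 unfolding C_def by simp
    show ?thesis
    proof
      fix i
      have "\<bar>spoly d \<sigma> g h i\<bar> \<le> \<bar>lc d \<sigma> h\<bar> * \<bar>g i\<bar> + \<bar>lc d \<sigma> g\<bar> * \<bar>h i\<bar>"
        unfolding spoly_def by (metis abs_mult abs_triangle_ineq4)
      also have "\<dots> \<le> C * N + N * C"
        using lch lcg gb C C0 N1 by (intro add_mono mult_mono) auto
      also have "\<dots> = N * (2 * N) ^ Suc e" unfolding C_def by (simp add: algebra_simps)
      also have "\<dots> \<le> N * (2 * N) ^ (Suc d - rk d \<sigma> (spoly d \<sigma> g h))"
        using N1 ee by (intro mult_left_mono power_increasing) auto
      finally show "\<bar>spoly d \<sigma> g h i\<bar> \<le> N * (2 * N) ^ (Suc d - rk d \<sigma> (spoly d \<sigma> g h))" .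
    qed
  qed
qed

lemma Delta_coeff':
  fixes N :: int
  assumes sys: "is_system d \<Phi>" and vo: "var_order d \<sigma>"
    and Nb: "\<forall>t\<in>terms \<Phi>. \<forall>i. \<bar>t i\<bar> \<le> N" and N1: "1 \<le> N"
    and x: "x \<in> Delta d \<sigma> \<Phi> f"
  shows "\<bar>x i\<bar> \<le> (2 * N) ^ (d + 2)"
proof -
  have "\<bar>x i\<bar> \<le> N * (2 * N) ^ (Suc d - rk d \<sigma> x)" using Delta_coeff[OF sys vo Nb N1 x] by blast
  also have "\<dots> \<le> (2 * N) * (2 * N) ^ (Suc d)"
    using N1 by (intro mult_mono power_increasing) auto
  also have "\<dots> = (2 * N) ^ (d + 2)" by simp
  finally show ?thesis .
qed

lemma norm_set_eq: "{\<bar>h i\<bar> | h i. h \<in> terms \<Phi> \<and> i \<le> d} = (\<lambda>(h, i). \<bar>h i\<bar>) ` (terms \<Phi> \<times> {..d})"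
  by auto

lemma norm_facts:
  assumes sys: "is_system d \<Phi>"
  shows "(\<forall>t\<in>terms \<Phi>. \<forall>i. \<bar>t i\<bar> \<le> norm_inf d \<Phi>) \<and> 1 \<le> norm_inf d \<Phi>"
proof -
  let ?S = "{\<bar>h i\<bar> | h i. h \<in> terms \<Phi> \<and> i \<le> d}"
  have fin: "finite ?S" unfolding norm_set_eq using finite_terms by simp
  have ge: "\<bar>t i\<bar> \<le> norm_inf d \<Phi>" if "t \<in> terms \<Phi>" "i \<le> d" for t i
    unfolding norm_inf_def by (rule Max_ge[OF fin]) (use that in blast)
  have "\<Phi> \<noteq> []" using sys unfolding is_system_def by auto
  then obtain pr where "pr \<in> set \<Phi>" by (cases \<Phi>) auto
  then have "(fst pr, snd pr) \<in> set \<Phi>" by simp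
  then obtain f g where fg: "(f, g) \<in> set \<Phi>" by blast
  have fnz: "f \<noteq> (\<lambda>_. 0)" "in_vars d f" using sys_props[OF sys fg] by auto
  then obtain i where i: "f i \<noteq> 0" by auto
  then have id: "i \<le> d" using fnz(2) unfolding in_vars_def by (meson not_le)
  have "1 \<le> \<bar>f i\<bar>" using i by linarith
  also have "\<dots> \<le> norm_inf d \<Phi>" using ge[OF lhs_terms'[OF fg] id] .
  finally have N1: "1 \<le> norm_inf d \<Phi>" .
  have "\<forall>t\<in>terms \<Phi>. \<forall>i. \<bar>t i\<bar> \<le> norm_inf d \<Phi>"
  proof (intro ballI allI)
    fix t i assume t: "t \<in> terms \<Phi>"
    show "\<bar>t i\<bar> \<le> norm_inf d \<Phi>"
    proof (cases "i \<le> d")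
      case True then show ?thesis using ge t by blast
    next
      case False
      then have "t i = 0" using terms_in_vars[OF sys t] unfolding in_vars_def by simp
      then show ?thesis using N1 by simp
    qed
  qed
  then show ?thesis using N1 by blast
qed

lemma bits_facts:
  fixes N :: int
  assumes "0 \<le> N"
  defines "b \<equiv> nat \<lceil>log 2 (real_of_int (\<bar>N\<bar> + 1))\<rceil>"
  shows "bitsize N = 1 + int b" "N + 1 \<le> 2 ^ b"
proof -
  have l0: "0 \<le> log 2 (real_of_int (\<bar>N\<bar> + 1))" using assms(1) by simp
  have c0: "0 \<le> \<lceil>log 2 (real_of_int (\<bar>N\<bar> + 1))\<rceil>" using l0 by (simp only: zero_le_ceiling)
  have "int b = \<lceil>log 2 (real_of_int (\<bar>N\<bar> + 1))\<rceil>" unfolding b_def using c0 by (simp only: int_nat_eq) simp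
  then show "bitsize N = 1 + int b" unfolding bitsize_def by simp
  have "log 2 (real_of_int (N + 1)) \<le> real b" unfolding b_def using assms(1) l0
    by (simp add: real_nat_ceiling_ge)
  then have "real_of_int (N + 1) \<le> 2 powr (real b)"
    using assms(1) by (subst (asm) log_le_iff) auto
  then have "real_of_int (N + 1) \<le> 2 ^ b" by (simp add: powr_realpow)
  then have "real_of_int (N + 1) \<le> real_of_int (2 ^ b)" by simp
  then show "N + 1 \<le> 2 ^ b" by (simp only: of_int_le_iff)
qed

lemma prod_Un_le:
  fixes f :: "'a \<Rightarrow> nat"
  assumes "finite A" "finite B" "\<forall>a\<in>A \<union> B. 1 \<le> f a"
  shows "prod f (A \<union> B) \<le> prod f A * prod f B"
proof -
  have "prod f (A \<union> B) * prod f (A \<inter> B) = prod f A * prod f B"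
    using assms by (rule_tac prod.union_inter) auto
  moreover have "1 \<le> prod f (A \<inter> B)" using assms by (intro prod_ge_1) auto
  moreover have "prod f (A \<union> B) \<le> prod f (A \<union> B) * prod f (A \<inter> B)"
    using \<open>1 \<le> prod f (A \<inter> B)\<close> by simp
  ultimately show ?thesis by simp
qed

lemma prod_int_range: "(\<Prod>a\<in>int ` {1..n}. nat \<bar>a\<bar>) = fact n"
proof -
  have "(\<Prod>a\<in>int ` {1..n}. nat \<bar>a\<bar>) = (\<Prod>k\<in>{1..n}. nat \<bar>int k\<bar>)"
    by (simp add: prod.reindex)
  also have "\<dots> = (\<Prod>k\<in>{1..n}. k)" by simp
  also have "\<dots> = fact n" by (simp add: fact_prod)
  finally show ?thesis .
qed

lemma fact_le_pow2: "n \<le> 2 ^ L \<Longrightarrow> fact n \<le> (2::nat) ^ (n * L)"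
proof -
  assume a: "n \<le> 2 ^ L"
  have "fact n \<le> (of_nat (n ^ n) :: nat)" by (rule fact_le_power)
  then have "fact n \<le> n ^ n" by simp
  also have "\<dots> \<le> (2 ^ L) ^ n" using a by (rule power_mono) simp
  also have "\<dots> = 2 ^ (n * L)" by (simp add: power_mult[symmetric] mult.commute)
  finally show ?thesis .
qed

lemma log_prod_le:
  assumes "(\<Prod>p\<in>P. p) \<le> (2::nat) ^ E" "\<forall>p\<in>P. 0 < p" "finite P"
  shows "log 2 (\<Prod>p\<in>P. real p) \<le> real E"
proof -
  have "0 < (\<Prod>p\<in>P. p)" using assms by (simp add: prod_pos)
  then have "log 2 (real (\<Prod>p\<in>P. p)) \<le> real E" using assms(1) by (rule_tac log2_of_power_le) auto
  then show ?thesis by simp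
qed

lemma primes_dvd_prod:
  fixes P :: "nat set"
  assumes "finite P" "\<forall>p\<in>P. prime p \<and> p dvd n"
  shows "(\<Prod>p\<in>P. p) dvd n"
  using assms
proof (induction P rule: finite_induct)
  case empty then show ?case by simp
next
  case (insert p P)
  have "coprime p (\<Prod>q\<in>P. q)"
    using insert by (auto intro!: prod_coprime_right) (metis primes_coprime)
  then show ?case using insert by (simp add: divides_mult)
qed

lemma primes_prod_le:
  fixes S :: "int set" and P :: "nat set"
  assumes S: "finite S" "0 \<notin> S" and P: "\<forall>p\<in>P. prime p \<and> (\<exists>a\<in>S. int p dvd a)"
  shows "finite P \<and> (\<Prod>p\<in>P. p) \<le> (\<Prod>a\<in>S. nat \<bar>a\<bar>)"
proof -
  have sub: "P \<subseteq> (\<Union>a\<in>S. {..nat \<bar>a\<bar>})"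
  proof
    fix p assume "p \<in> P"
    then obtain a where a: "a \<in> S" "int p dvd a" using P by blast
    then have "a \<noteq> 0" using S by auto
    then have "int p \<le> \<bar>a\<bar>" using a by (simp add: zdvd_imp_le)
    then have "p \<le> nat \<bar>a\<bar>" by linarith
    then show "p \<in> (\<Union>a\<in>S. {..nat \<bar>a\<bar>})" using a by auto
  qed
  have fin: "finite P" by (rule finite_subset[OF sub]) (use S in auto)
  have pos: "(\<Prod>a\<in>S. nat \<bar>a\<bar>) > 0" using S by (auto simp: prod_pos)
  have "\<forall>p\<in>P. prime p \<and> p dvd (\<Prod>a\<in>S. nat \<bar>a\<bar>)"
  proof
    fix p assume "p \<in> P"
    then obtain a where a: "a \<in> S" "int p dvd a" "prime p" using P by blast
    then have "p dvd nat \<bar>a\<bar>"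
    proof -
      have "int p dvd \<bar>a\<bar>" using a by simp
      also have "\<bar>a\<bar> = int (nat \<bar>a\<bar>)" by simp
      finally show ?thesis by (simp only: int_dvd_int_iff)
    qed
    then show "prime p \<and> p dvd (\<Prod>a\<in>S. nat \<bar>a\<bar>)"
      using a S by (meson dvd_prodI dvd_trans)
  qed
  then have "(\<Prod>p\<in>P. p) dvd (\<Prod>a\<in>S. nat \<bar>a\<bar>)" using fin primes_dvd_prod by blast
  then show ?thesis using fin pos by (simp add: dvd_imp_le)
qed

lemma nat_poly1: "(m::nat) * m + b * (m * (d + 1)) \<le> m * m * (d + 2) * (b + 3)"
proof -
  have "m * m \<le> 3 * (m * m * (d + 2))" by simp
  moreover have "b * (m * (d + 1)) \<le> b * (m * m * (d + 2))"
  proof (cases "m = 0")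
    case False
    have "m * (d + 1) \<le> m * (d + 2)" by simp
    also have "\<dots> \<le> m * m * (d + 2)" by (rule mult_le_mono1[OF le_square])
    finally have "m * (d + 1) \<le> m * m * (d + 2)" .
    then show ?thesis by simp
  qed simp
  ultimately have "m * m + b * (m * (d + 1)) \<le> 3 * (m * m * (d + 2)) + b * (m * m * (d + 2))"
    by (rule add_mono)
  also have "\<dots> = m * m * (d + 2) * (b + 3)" by (simp add: algebra_simps)
  finally show ?thesis .
qed

lemma part1:
  assumes sys: "is_system d \<Phi>"
  shows "finite (primesP \<Phi>) \<and>
          log 2 (\<Prod>p\<in>primesP \<Phi>. real p)
            \<le> real (length \<Phi>) ^ 2 * (real d + 2) * (real_of_int (bitsize (norm_inf d \<Phi>)) + 2)"
proof -
  define m where "m = length \<Phi>"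
  define N where "N = norm_inf d \<Phi>"
  define b where "b = nat \<lceil>log 2 (real_of_int (\<bar>N\<bar> + 1))\<rceil>"
  have nf: "\<forall>t\<in>terms \<Phi>. \<forall>i. \<bar>t i\<bar> \<le> N" "1 \<le> N" using norm_facts[OF sys] unfolding N_def by auto
  have bs: "bitsize N = 1 + int b" "N + 1 \<le> 2 ^ b" using bits_facts[of N] nf(2) unfolding b_def by auto
  have Nb: "nat N \<le> 2 ^ b" using bs(2) nf(2) by (simp add: nat_le_iff)
  define S1 where "S1 = int ` {1..m}"
  define C1 where "C1 = {f i | f i. f \<in> lhs \<Phi> \<and> i \<le> d \<and> f i \<noteq> 0}"
  have C1sub: "C1 \<subseteq> (\<lambda>(f, i). f i) ` (lhs \<Phi> \<times> {..d})" unfolding C1_def by auto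
  have finC1: "finite C1" by (rule finite_subset[OF C1sub]) (simp add: lhs_def)
  have cardC1: "card C1 \<le> m * (d + 1)"
  proof -
    have "card C1 \<le> card ((\<lambda>(f, i). f i) ` (lhs \<Phi> \<times> {..d}))"
      by (rule card_mono[OF _ C1sub]) (simp add: lhs_def)
    also have "\<dots> \<le> card (lhs \<Phi> \<times> {..d})" by (rule card_image_le) (simp add: lhs_def)
    also have "\<dots> = card (lhs \<Phi>) * (d + 1)" by (simp add: card_cartesian_product)
    also have "\<dots> \<le> m * (d + 1)" unfolding m_def by (rule mult_le_mono1[OF card_lhs])
    finally show ?thesis .
  qed
  have Pcond: "\<forall>p\<in>primesP \<Phi>. prime p \<and> (\<exists>a\<in>S1 \<union> C1. int p dvd a)"
  proof
    fix p assume p: "p \<in> primesP \<Phi>"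
    then have pp: "prime p" unfolding primesP_def by simp
    show "prime p \<and> (\<exists>a\<in>S1 \<union> C1. int p dvd a)"
    proof (cases "p \<le> m")
      case True
      have "1 \<le> p" using pp prime_ge_1_nat by blast
      then have "int p \<in> S1" unfolding S1_def using True by (intro imageI) simp
      then show ?thesis using pp by (intro conjI bexI[of _ "int p"]) auto
    next
      case False
      have "\<exists>f \<in> lhs \<Phi>. \<exists>i. f i \<noteq> 0 \<and> int p dvd f i"
        using p False unfolding primesP_def m_def by blast
      then obtain f i where fi: "f \<in> lhs \<Phi>" "f i \<noteq> 0" "int p dvd f i" by blast
      have "in_vars d f" using terms_in_vars[OF sys] fi(1) lhs_terms[of \<Phi>] by (meson subsetD)
      then have "i \<le> d" using fi(2) unfolding in_vars_def by (cases "i \<le> d") auto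
      then have "f i \<in> C1" unfolding C1_def using fi by blast
      then show ?thesis using pp fi(3) by (intro conjI bexI[of _ "f i"]) auto
    qed
  qed
  have finS: "finite (S1 \<union> C1)" using finC1 unfolding S1_def by simp
  have z: "0 \<notin> S1 \<union> C1" unfolding S1_def C1_def by auto
  have main: "finite (primesP \<Phi>) \<and> (\<Prod>p\<in>primesP \<Phi>. p) \<le> (\<Prod>a\<in>S1 \<union> C1. nat \<bar>a\<bar>)"
    by (rule primes_prod_le[OF finS z Pcond])
  have U: "(\<Prod>a\<in>S1 \<union> C1. nat \<bar>a\<bar>) \<le> (\<Prod>a\<in>S1. nat \<bar>a\<bar>) * (\<Prod>a\<in>C1. nat \<bar>a\<bar>)"
  proof (rule prod_Un_le)
    show "\<forall>a\<in>S1 \<union> C1. 1 \<le> nat \<bar>a\<bar>"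
    proof
      fix a assume "a \<in> S1 \<union> C1"
      then have "a \<noteq> 0" using z by auto
      then show "1 \<le> nat \<bar>a\<bar>" by arith
    qed
  qed (use finC1 in \<open>auto simp: S1_def\<close>)
  have A: "(\<Prod>a\<in>S1. nat \<bar>a\<bar>) \<le> (2::nat) ^ (m * m)"
  proof -
    have "(\<Prod>a\<in>S1. nat \<bar>a\<bar>) = fact m" unfolding S1_def by (rule prod_int_range)
    also have "fact m \<le> (2::nat) ^ (m * m)" by (rule fact_le_pow2) (simp add: less_exp less_imp_le)
    finally show ?thesis .
  qed
  have B: "(\<Prod>a\<in>C1. nat \<bar>a\<bar>) \<le> 2 ^ (b * (m * (d + 1)))"
  proof -
    have "(\<Prod>a\<in>C1. nat \<bar>a\<bar>) \<le> (nat N) ^ (m * (d + 1))"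
    proof (rule prod_le_power)
      show "\<And>i. i \<in> C1 \<Longrightarrow> 0 \<le> nat \<bar>i\<bar> \<and> nat \<bar>i\<bar> \<le> nat N"
      proof -
        fix a assume "a \<in> C1"
        then obtain f i where "a = f i" "f \<in> lhs \<Phi>" unfolding C1_def by blast
        then have "\<bar>a\<bar> \<le> N" using nf(1) lhs_terms by blast
        then show "0 \<le> nat \<bar>a\<bar> \<and> nat \<bar>a\<bar> \<le> nat N" by simp
      qed
    qed (use cardC1 nf(2) in auto)
    also have "\<dots> \<le> (2 ^ b) ^ (m * (d + 1))" using Nb by (rule power_mono) simp
    also have "\<dots> = 2 ^ (b * (m * (d + 1)))" by (simp add: power_mult)
    finally show ?thesis .
  qed
  have "(\<Prod>p\<in>primesP \<Phi>. p) \<le> (\<Prod>a\<in>S1 \<union> C1. nat \<bar>a\<bar>)" using main by simp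
  also have "\<dots> \<le> 2 ^ (m * m) * 2 ^ (b * (m * (d + 1)))" using U mult_le_mono[OF A B] by (rule le_trans)
  also have "\<dots> = 2 ^ (m * m + b * (m * (d + 1)))" by (simp add: power_add)
  finally have pb: "(\<Prod>p\<in>primesP \<Phi>. p) \<le> 2 ^ (m * m + b * (m * (d + 1)))" .
  have "log 2 (\<Prod>p\<in>primesP \<Phi>. real p) \<le> real (m * m + b * (m * (d + 1)))"
    using pb main by (intro log_prod_le) (auto simp: primesP_def prime_gt_0_nat)
  also have "\<dots> \<le> real (m * m * (d + 2) * (b + 3))" using nat_poly1 by (simp only: of_nat_le_iff)
  also have "\<dots> = real m ^ 2 * (real d + 2) * (real_of_int (bitsize N) + 2)"
    using bs(1) by (simp add: power2_eq_square algebra_simps)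
  finally show ?thesis using main unfolding m_def N_def by simp
qed

lemma DeltaAll_sub:
  assumes sys: "is_system d \<Phi>"
  shows "DeltaAll d \<sigma> \<Phi> \<subseteq> terms \<Phi> \<union> (\<Union>f\<in>{f \<in> lhs \<Phi>. f \<in> prim_part ` lhs \<Phi>}. Delta d \<sigma> \<Phi> f)"
proof
  fix x assume "x \<in> DeltaAll d \<sigma> \<Phi>"
  then obtain h where h: "h \<in> terms \<Phi>" "h \<noteq> (\<lambda>_. 0)" "x \<in> Delta d \<sigma> \<Phi> (prim_part h)"
    unfolding DeltaAll_def by blast
  show "x \<in> terms \<Phi> \<union> (\<Union>f\<in>{f \<in> lhs \<Phi>. f \<in> prim_part ` lhs \<Phi>}. Delta d \<sigma> \<Phi> f)"
  proof (cases "\<exists>g. (prim_part h, g) \<in> set \<Phi>")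
    case True
    then obtain g where g: "(prim_part h, g) \<in> set \<Phi>" by blast
    then have l: "prim_part h \<in> lhs \<Phi>" unfolding lhs_def by force
    have "prim_part (prim_part h) = prim_part h"
      using prim_part_primitive[OF primitive_prim_part[OF h(2)]] .
    then have "prim_part h \<in> prim_part ` lhs \<Phi>" by (rule image_eqI[OF _ l, OF sym])
    then show ?thesis using l h(3) by blast
  next
    case False
    then have "x \<in> terms \<Phi>" using Delta_no_rhs[of "prim_part h" \<Phi> d \<sigma>] h(3) by blast
    then show ?thesis by blast
  qed
qed

lemma nat_poly2: "1 \<le> (m::nat) \<Longrightarrow> 2 * m + m * (2 * m * (d + 2)) \<le> 3 * (m * m * (d + 2))"
proof -
  assume m: "1 \<le> m"
  have "2 * m \<le> m * m * (d + 2)"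
  proof -
    have "2 * m \<le> (d + 2) * m" by simp
    also have "\<dots> \<le> (d + 2) * (m * m)" by (rule mult_le_mono2[OF le_square])
    finally show ?thesis by (simp add: mult.commute)
  qed
  moreover have e: "m * (2 * m * (d + 2)) = 2 * (m * m * (d + 2))" by (simp add: algebra_simps)
  ultimately show ?thesis unfolding e by linarith
qed

lemma DeltaAll_facts:
  fixes N :: int
  assumes sys: "is_system d \<Phi>" and vo: "var_order d \<sigma>" and elim: "elimination_property d \<sigma> \<Phi>"
    and Nb: "\<forall>t\<in>terms \<Phi>. \<forall>i. \<bar>t i\<bar> \<le> N" and N1: "1 \<le> N"
  shows "finite (DeltaAll d \<sigma> \<Phi>) \<and> card (DeltaAll d \<sigma> \<Phi>) \<le> 3 * (length \<Phi> * length \<Phi> * (d + 2))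
     \<and> (\<forall>x\<in>DeltaAll d \<sigma> \<Phi>. in_vars d x \<and> (\<forall>i. \<bar>x i\<bar> \<le> (2 * N) ^ (d + 2)))"
proof -
  define m where "m = length \<Phi>"
  define F where "F = {f \<in> lhs \<Phi>. f \<in> prim_part ` lhs \<Phi>}"
  have finF: "finite F" unfolding F_def lhs_def by simp
  have cardF: "card F \<le> m"
  proof -
    have "card F \<le> card (lhs \<Phi>)" by (rule card_mono) (auto simp: F_def lhs_def)
    then show ?thesis using card_lhs[of \<Phi>] unfolding m_def by simp
  qed
  have EL: "EL d \<sigma> \<Phi> f" if "f \<in> F" for f using EL_of_elim[OF elim] that unfolding F_def by blast
  have DC: "finite (Delta d \<sigma> \<Phi> f) \<and> card (Delta d \<sigma> \<Phi> f) \<le> 2 * m * (d + 2)" if "f \<in> F" for f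
    using Delta_card[OF sys vo EL[OF that]] unfolding m_def by simp
  define U where "U = terms \<Phi> \<union> (\<Union>f\<in>F. Delta d \<sigma> \<Phi> f)"
  have sub: "DeltaAll d \<sigma> \<Phi> \<subseteq> U" using DeltaAll_sub[OF sys] unfolding U_def F_def .
  have finU: "finite U" unfolding U_def using finF DC finite_terms by blast
  have "card U \<le> card (terms \<Phi>) + card (\<Union>f\<in>F. Delta d \<sigma> \<Phi> f)" unfolding U_def by (rule card_Un_le)
  also have "card (\<Union>f\<in>F. Delta d \<sigma> \<Phi> f) \<le> (\<Sum>f\<in>F. card (Delta d \<sigma> \<Phi> f))" by (rule card_UN_le[OF finF])
  also have "\<dots> \<le> card F * (2 * m * (d + 2))"
    using sum_bounded_above[of F "\<lambda>f. card (Delta d \<sigma> \<Phi> f)" "2 * m * (d + 2)"] DC by simp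
  also have "\<dots> \<le> m * (2 * m * (d + 2))" using cardF by (rule mult_le_mono1)
  finally have "card U \<le> card (terms \<Phi>) + m * (2 * m * (d + 2))" by simp
  also have "\<dots> \<le> 2 * m + m * (2 * m * (d + 2))" using card_terms[of \<Phi>] unfolding m_def by simp
  also have "\<dots> \<le> 3 * (m * m * (d + 2))"
    by (rule nat_poly2) (use sys in \<open>simp add: m_def is_system_def\<close>)
  finally have cU: "card U \<le> 3 * (m * m * (d + 2))" .
  have "card (DeltaAll d \<sigma> \<Phi>) \<le> card U" by (rule card_mono[OF finU sub])
  moreover have "finite (DeltaAll d \<sigma> \<Phi>)" by (rule finite_subset[OF sub finU])
  moreover have "\<forall>x\<in>DeltaAll d \<sigma> \<Phi>. in_vars d x \<and> (\<forall>i. \<bar>x i\<bar> \<le> (2 * N) ^ (d + 2))"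
  proof
    fix x assume "x \<in> DeltaAll d \<sigma> \<Phi>"
    then obtain f where "x \<in> Delta d \<sigma> \<Phi> f" unfolding DeltaAll_def by blast
    then show "in_vars d x \<and> (\<forall>i. \<bar>x i\<bar> \<le> (2 * N) ^ (d + 2))"
      using Delta_in_vars[OF sys] Delta_coeff'[OF sys vo Nb N1] by blast
  qed
  ultimately show ?thesis using cU unfolding m_def by simp
qed

lemma Mmod_multiples:
  assumes sys: "is_system d \<Phi>" and f: "primitive f"
    and nf: "f \<notin> prim_part ` lhs \<Phi>" and nf': "(\<lambda>i. - f i) \<notin> prim_part ` lhs \<Phi>"
  shows "x \<in> Mmod \<Phi> f \<Longrightarrow> \<exists>c. x = smult_lp c f"
proof (induction rule: Mmod.induct)
  case gen then show ?case by (intro exI[of _ 1]) (simp add: smult_lp_1)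
next
  case (add g h)
  then obtain c1 c2 where "g = smult_lp c1 f" "h = smult_lp c2 f" by blast
  then show ?case by (intro exI[of _ "c1 + c2"]) (simp add: smult_lp_def algebra_simps)
next
  case (smul g b)
  then obtain c where "g = smult_lp c f" by blast
  then show ?case by (intro exI[of _ "b * c"]) (simp add: smult_lp_def algebra_simps)
next
  case (dvd g h b)
  then obtain c where c: "smult_lp b g = smult_lp c f" by blast
  show ?case
  proof (cases "b = 0")
    case True then show ?thesis by (intro exI[of _ 0]) (simp add: smult_lp_0)
  next
    case False
    have gnz: "g \<noteq> (\<lambda>_. 0)" using sys_props[OF sys dvd(1)] by simp
    have gl: "g \<in> lhs \<Phi>" using dvd(1) unfolding lhs_def by force
    have "prim_part g = f \<or> prim_part g = (\<lambda>i. - f i)"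
      by (rule prim_part_multiple[OF f gnz False c])
    then have False using nf nf' gl by (metis imageI)
    then show ?thesis ..
  qed
qed

lemma ml_P3:
  fixes N :: int
  assumes sys: "is_system d \<Phi>" and vo: "var_order d \<sigma>" and elim: "elimination_property d \<sigma> \<Phi>"
    and Nb: "\<forall>t\<in>terms \<Phi>. \<forall>i. \<bar>t i\<bar> \<le> N" and N1: "1 \<le> N"
    and f: "f \<in> terms \<Phi>" "primitive f" and g: "g \<in> Delta d \<sigma> \<Phi> f"
    and lam: "lam \<noteq> 0" "smult_lp lam g \<in> Mmod \<Phi> f"
  shows "min_lambda \<Phi> f g \<le> nat N ^ (d + 1)"
proof -
  have Nb': "\<forall>t\<in>terms \<Phi>. \<forall>i. \<bar>t i\<bar> \<le> int (nat N)" using Nb N1 by simp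
  have N1': "1 \<le> nat N" using N1 by simp
  have pw: "nat N ^ rk d \<sigma> h \<le> nat N ^ (d + 1)" for h
    using N1' rk_le[of d \<sigma> h] by (intro power_increasing) auto
  show ?thesis
  proof (cases "f \<in> prim_part ` lhs \<Phi>")
    case True
    have "min_lambda \<Phi> f g \<le> nat N ^ rk d \<sigma> g"
      by (rule lam_bound[OF sys vo EL_of_elim[OF elim True] Nb' N1' g lam])
    then show ?thesis using pw[of g] by linarith
  next
    case nf: False
    have norhs: "\<forall>g. (f, g) \<notin> set \<Phi>"
    proof (intro allI notI)
      fix g' assume "(f, g') \<in> set \<Phi>"
      then have "f \<in> lhs \<Phi>" unfolding lhs_def by force
      moreover have "prim_part f = f" by (rule prim_part_primitive[OF f(2)])
      ultimately have "f \<in> prim_part ` lhs \<Phi>" by (metis image_eqI)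
      then show False using nf by simp
    qed
    have gT: "g \<in> terms \<Phi>" using Delta_no_rhs[OF norhs] g by blast
    show ?thesis
    proof (cases "(\<lambda>i. - f i) \<in> prim_part ` lhs \<Phi>")
      case True
      let ?f' = "\<lambda>i. - f i"
      have gD': "g \<in> Delta d \<sigma> \<Phi> ?f'" using gT by (rule Delta.base)
      have Meq: "Mmod \<Phi> ?f' = Mmod \<Phi> f" by (rule Mmod_neg)
      have lam': "smult_lp lam g \<in> Mmod \<Phi> ?f'" using lam(2) Meq by simp
      have "min_lambda \<Phi> ?f' g \<le> nat N ^ rk d \<sigma> g"
        by (rule lam_bound[OF sys vo EL_of_elim[OF elim True] Nb' N1' gD' lam(1) lam'])
      moreover have "min_lambda \<Phi> ?f' g = min_lambda \<Phi> f g" unfolding min_lambda_def Meq ..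
      ultimately show ?thesis using pw[of g] by linarith
    next
      case nf': False
      obtain c where c: "smult_lp lam g = smult_lp c f"
        using Mmod_multiples[OF sys f(2) nf nf' lam(2)] by blast
      have "min_lambda \<Phi> f g \<le> 1"
      proof (cases "g = (\<lambda>_. 0)")
        case True
        have "smult_lp 1 g \<in> Mmod \<Phi> f" using True Mmod_zero by (simp add: smult_lp_1)
        then show ?thesis using ml_le[of 1 g \<Phi> f] by simp
      next
        case False
        have pp: "prim_part g = f \<or> prim_part g = (\<lambda>i. - f i)"
          by (rule prim_part_multiple[OF f(2) False lam(1) c])
        have "\<exists>a. g = smult_lp a f"
        proof (cases "prim_part g = f")
          case True
          have "g = smult_lp (pgcd g) f"
            unfolding smult_lp_def using prim_part_split[of g] True by (intro ext) metis
          then show ?thesis by blast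
        next
          case False
          then have pf: "prim_part g = (\<lambda>i. - f i)" using pp by simp
          have "g = smult_lp (- pgcd g) f"
            unfolding smult_lp_def
          proof
            fix i show "g i = - pgcd g * f i" using prim_part_split[of g i] pf by simp
          qed
          then show ?thesis by blast
        qed
        then obtain a where "g = smult_lp a f" by blast
        then have "smult_lp 1 g \<in> Mmod \<Phi> f" by (simp add: smult_lp_1 Mmod.smul Mmod.gen)
        then show ?thesis using ml_le[of 1 g \<Phi> f] by simp
      qed
      moreover have "1 \<le> nat N ^ (d + 1)" using N1' by simp
      ultimately show ?thesis by linarith
    qed
  qed
qed

lemma final_arith:
  fixes a d b :: nat
  shows "18 * ((Suc a * Suc a * (d + 2)) * (Suc a * Suc a * (d + 2))) * ((5 + 2 * (2 * a + (d + 1))) + (d + 1) * ((b + 1) * (2 * d + 4) + 1))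
      + 2 * Suc a * (3 * (Suc a * Suc a * (d + 2))) * (b * (d + 1))
      \<le> 64 * Suc a ^ 5 * (d + 2) ^ 4 * (b + 3)"
proof -
  have "64 * Suc a ^ 5 * (d + 2) ^ 4 * (b + 3) = 18 * ((Suc a * Suc a * (d + 2)) * (Suc a * Suc a * (d + 2))) * ((5 + 2 * (2 * a + (d + 1))) + (d + 1) * ((b + 1) * (2 * d + 4) + 1))
      + 2 * Suc a * (3 * (Suc a * Suc a * (d + 2))) * (b * (d + 1)) + (2208 + 724 * b + 4632 * d + 1310 * d * b + 3600 * d ^ 2 + 882 * d ^ 2 * b + 1230 * d ^ 3 + 260 * d ^ 3 * b + 156 * d ^ 4 + 28 * d ^ 4 * b + 11616 * a + 3932 * a * b + 24384 * a * d + 7306 * a * d * b + 18936 * a * d ^ 2 + 5070 * a * d ^ 2 * b + 6456 * a * d ^ 3 + 1552 * a * d ^ 3 * b + 816 * a * d ^ 4 + 176 * a * d ^ 4 * b + 24384 * a ^ 2 + 8476 * a ^ 2 * b + 51216 * a ^ 2 * d + 16106 * a ^ 2 * d * b + 39744 * a ^ 2 * d ^ 2 + 11454 * a ^ 2 * d ^ 2 * b + 13524 * a ^ 2 * d ^ 3 + 3608 * a ^ 2 * d ^ 3 * b + 1704 * a ^ 2 * d ^ 4 + 424 * a ^ 2 * d ^ 4 * b + 25536 * a ^ 3 + 9076 * a ^ 3 * b + 53664 * a ^ 3 * d + 17582 * a ^ 3 * d * b + 41616 * a ^ 3 * d ^ 2 + 12762 * a ^ 3 * d ^ 2 * b + 14136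 * a ^ 3 * d ^ 3 + 4112 * a ^ 3 * d ^ 3 * b + 1776 * a ^ 3 * d ^ 4 + 496 * a ^ 3 * d ^ 4 * b + 13344 * a ^ 4 + 4832 * a ^ 4 * b + 28056 * a ^ 4 * d + 9520 * a ^ 4 * d * b + 21744 * a ^ 4 * d ^ 2 + 7032 * a ^ 4 * d ^ 2 * b + 7374 * a ^ 4 * d ^ 3 + 2308 * a ^ 4 * d ^ 3 * b + 924 * a ^ 4 * d ^ 4 + 284 * a ^ 4 * d ^ 4 * b + 2784 * a ^ 5 + 1024 * a ^ 5 * b + 5856 * a ^ 5 * d + 2048 * a ^ 5 * d * b + 4536 * a ^ 5 * d ^ 2 + 1536 * a ^ 5 * d ^ 2 * b + 1536 * a ^ 5 * d ^ 3 + 512 * a ^ 5 * d ^ 3 * b + 192 * a ^ 5 * d ^ 4 + 64 * a ^ 5 * d ^ 4 * b)"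
    apply (subst of_nat_eq_iff[symmetric, where 'a=int])
    apply (simp only: of_nat_add of_nat_mult of_nat_power of_nat_Suc of_nat_numeral of_nat_1)
    apply algebra
    done
  then show ?thesis by linarith
qed

lemma pow_facts: "Suc k \<le> 2 ^ k" "d + 2 \<le> (2::nat) ^ (d + 1)"
proof -
  show "Suc k \<le> 2 ^ k" using less_exp[of k] by (simp add: Suc_le_eq)
  show "d + 2 \<le> (2::nat) ^ (d + 1)" using less_exp[of "Suc d"] by simp
qed

lemma part2:
  assumes sys: "is_system d \<Phi>" and vo: "var_order d \<sigma>" and elim: "elimination_property d \<sigma> \<Phi>"
  shows "finite (primesP0 d \<sigma> \<Phi>) \<and>
          log 2 (\<Prod>p\<in>primesP0 d \<sigma> \<Phi>. real p)
            \<le> 64 * real (length \<Phi>) ^ 5 * (real d + 2) ^ 4 * (real_of_int (bitsize (norm_inf d \<Phi>)) + 2)"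
proof -
  define m where "m = length \<Phi>"
  define N where "N = norm_inf d \<Phi>"
  define b where "b = nat \<lceil>log 2 (real_of_int (\<bar>N\<bar> + 1))\<rceil>"
  have nf: "\<forall>t\<in>terms \<Phi>. \<forall>i. \<bar>t i\<bar> \<le> N" "1 \<le> N" using norm_facts[OF sys] unfolding N_def by auto
  have bs: "bitsize N = 1 + int b" "N + 1 \<le> 2 ^ b" using bits_facts[of N] nf(2) unfolding b_def by auto
  have m1: "1 \<le> m" using sys unfolding is_system_def m_def by simp
  then obtain a where ma: "m = Suc a" by (cases m) auto
  define D where "D = DeltaAll d \<sigma> \<Phi>"
  define X where "X = SX d \<sigma> D"
  define K where "K = m * m * (d + 2)"
  define C where "C = (2 * N) ^ (d + 2)"
  have DF: "finite D \<and> card D \<le> 3 * K \<and> (\<forall>x\<in>D. in_vars d x \<and> (\<forall>i. \<bar>x i\<bar> \<le> C))"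
    using DeltaAll_facts[OF sys vo elim nf(1) nf(2)] unfolding D_def K_def C_def m_def by simp
  have C1: "1 \<le> C" unfolding C_def using nf(2) by (intro one_le_power) simp
  have Xeq: "X = D \<union> (\<lambda>(f, g). spoly d \<sigma> f g) ` (D \<times> D)" unfolding X_def SX_def by auto
  have finX: "finite X" using DF Xeq by simp
  define c where "c = card X"
  have cX: "c \<le> 2 * card D * card D"
  proof -
    have "card X \<le> card D + card ((\<lambda>(f, g). spoly d \<sigma> f g) ` (D \<times> D))" unfolding Xeq by (rule card_Un_le)
    also have "card ((\<lambda>(f, g). spoly d \<sigma> f g) ` (D \<times> D)) \<le> card (D \<times> D)"
      by (rule card_image_le) (use DF in simp)
    also have "card (D \<times> D) = card D * card D" by (simp add: card_cartesian_product)
    finally have "card X \<le> card D + card D * card D" by simp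
    moreover have "card D \<le> card D * card D" by (rule le_square)
    ultimately show ?thesis unfolding c_def by linarith
  qed
  have XP: "\<forall>h\<in>X. in_vars d h \<and> (\<forall>i. \<bar>h i\<bar> \<le> 2 * C * C)"
  proof
    fix h assume "h \<in> X"
    then consider "h \<in> D" | f g where "f \<in> D" "g \<in> D" "h = spoly d \<sigma> f g" unfolding Xeq by auto
    then show "in_vars d h \<and> (\<forall>i. \<bar>h i\<bar> \<le> 2 * C * C)"
    proof cases
      case 1
      then have h: "in_vars d h" "\<forall>i. \<bar>h i\<bar> \<le> C" using DF by auto
      have "C * 1 \<le> C * C" using C1 by (intro mult_left_mono) auto
      then have "C \<le> 2 * C * C" using C1 by simp
      then show ?thesis using h by (meson order_trans)
    next
      case 2
      have iv: "in_vars d (spoly d \<sigma> f g)" using DF 2 in_vars_spoly by blast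
      have fb: "\<forall>i. \<bar>f i\<bar> \<le> C" "\<forall>i. \<bar>g i\<bar> \<le> C" using DF 2 by auto
      have lf: "\<bar>lc d \<sigma> f\<bar> \<le> C" "\<bar>lc d \<sigma> g\<bar> \<le> C" using lc_bound fb by auto
      have "\<forall>i. \<bar>spoly d \<sigma> f g i\<bar> \<le> 2 * C * C"
      proof
        fix i
        have "\<bar>spoly d \<sigma> f g i\<bar> \<le> \<bar>lc d \<sigma> g\<bar> * \<bar>f i\<bar> + \<bar>lc d \<sigma> f\<bar> * \<bar>g i\<bar>"
          unfolding spoly_def by (metis abs_mult abs_triangle_ineq4)
        also have "\<dots> \<le> C * C + C * C" using lf fb C1 by (intro add_mono mult_mono) auto
        finally show "\<bar>spoly d \<sigma> f g i\<bar> \<le> 2 * C * C" by simp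
      qed
      then show ?thesis using iv 2 by simp
    qed
  qed
  define L where "L = 5 + 2 * (2 * a + (d + 1))"
  have cL: "c \<le> 2 ^ L"
  proof -
    have "K \<le> 2 ^ a * 2 ^ a * 2 ^ (d + 1)" unfolding K_def ma
      using pow_facts by (intro mult_le_mono) auto
    also have "\<dots> = 2 ^ (2 * a + (d + 1))" by (simp only: power_add mult_2)
    finally have K: "K \<le> 2 ^ (2 * a + (d + 1))" .
    have "c \<le> 2 * (3 * K) * (3 * K)" using cX DF mult_le_mono[OF mult_le_mono[OF order_refl[of 2], of "card D" "3 * K"], of "card D" "3 * K"]
      by (meson le_trans)
    also have "\<dots> \<le> 32 * (K * K)" by simp
    also have "\<dots> \<le> 32 * (2 ^ (2 * a + (d + 1)) * 2 ^ (2 * a + (d + 1)))" using K by (intro mult_le_mono) auto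
    also have "\<dots> = (2::nat) ^ (5 + ((2 * a + (d + 1)) + (2 * a + (d + 1))))"
      by (simp only: power_add) simp
    also have "5 + ((2 * a + (d + 1)) + (2 * a + (d + 1))) = L" unfolding L_def by simp
    finally show ?thesis .
  qed
  define S1 where "S1 = int ` {1..c}"
  define S2 where "S2 = {h i | h i. h \<in> X \<and> i \<le> d \<and> h i \<noteq> 0}"
  define S3 where "S3 = {int (min_lambda \<Phi> f g) | f g. f \<in> terms \<Phi> \<and> primitive f \<and> g \<in> Delta d \<sigma> \<Phi> f
        \<and> (\<exists>lam. lam \<noteq> 0 \<and> smult_lp lam g \<in> Mmod \<Phi> f)}"
  have S2sub: "S2 \<subseteq> (\<lambda>(h, i). h i) ` (X \<times> {..d})" unfolding S2_def by auto
  have finS2: "finite S2" by (rule finite_subset[OF S2sub]) (use finX in simp)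
  have cS2: "card S2 \<le> c * (d + 1)"
  proof -
    have "card S2 \<le> card ((\<lambda>(h, i). h i) ` (X \<times> {..d}))" by (rule card_mono[OF _ S2sub]) (use finX in simp)
    also have "\<dots> \<le> card (X \<times> {..d})" by (rule card_image_le) (use finX in simp)
    also have "\<dots> = c * (d + 1)" unfolding c_def by (simp add: card_cartesian_product)
    finally show ?thesis .
  qed
  have DeltaD: "Delta d \<sigma> \<Phi> f \<subseteq> D" if "f \<in> terms \<Phi>" "primitive f" for f
  proof -
    have "f \<noteq> (\<lambda>_. 0)" using that(2) unfolding primitive_def by simp
    moreover have "prim_part f = f" by (rule prim_part_primitive[OF that(2)])
    ultimately show ?thesis unfolding D_def DeltaAll_def using that(1) by force
  qed
  have S3sub: "S3 \<subseteq> (\<lambda>(f, g). int (min_lambda \<Phi> f g)) ` (terms \<Phi> \<times> D)"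
    unfolding S3_def using DeltaD by fastforce
  have finS3: "finite S3" by (rule finite_subset[OF S3sub]) (use DF finite_terms in simp)
  have cS3: "card S3 \<le> 2 * m * (3 * K)"
  proof -
    have "card S3 \<le> card ((\<lambda>(f, g). int (min_lambda \<Phi> f g)) ` (terms \<Phi> \<times> D))"
      by (rule card_mono[OF _ S3sub]) (use DF finite_terms in simp)
    also have "\<dots> \<le> card (terms \<Phi> \<times> D)" by (rule card_image_le) (use DF finite_terms in simp)
    also have "\<dots> = card (terms \<Phi>) * card D" by (simp add: card_cartesian_product)
    also have "\<dots> \<le> 2 * m * (3 * K)" using card_terms[of \<Phi>] DF unfolding m_def by (intro mult_le_mono) auto
    finally show ?thesis .
  qed
  have S3val: "0 < a' \<and> a' \<le> int (nat N ^ (d + 1))" if a3: "a' \<in> S3" for a'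
  proof -
    obtain f g lam where fg: "a' = int (min_lambda \<Phi> f g)" "f \<in> terms \<Phi>" "primitive f"
      "g \<in> Delta d \<sigma> \<Phi> f" "lam \<noteq> 0" "smult_lp lam g \<in> Mmod \<Phi> f"
      using a3 unfolding S3_def by blast
    have "min_lambda \<Phi> f g \<le> nat N ^ (d + 1)"
      by (rule ml_P3[OF sys vo elim nf(1) nf(2) fg(2) fg(3) fg(4) fg(5) fg(6)])
    then have le: "int (min_lambda \<Phi> f g) \<le> int (nat N ^ (d + 1))" by (simp only: of_nat_le_iff)
    obtain a'' where "a'' \<noteq> 0" "\<bar>a''\<bar> = int (min_lambda \<Phi> f g)"
      using ml_props[OF fg(6) fg(5)] by blast
    then have pos: "0 < int (min_lambda \<Phi> f g)" by auto
    show ?thesis using le pos fg(1) by blast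
  qed
  have z: "0 \<notin> S1 \<union> S2 \<union> S3" using S3val unfolding S1_def S2_def by force
  have finS: "finite (S1 \<union> S2 \<union> S3)" using finS2 finS3 unfolding S1_def by simp
  have Pcond: "\<forall>p\<in>primesP0 d \<sigma> \<Phi>. prime p \<and> (\<exists>a\<in>S1 \<union> S2 \<union> S3. int p dvd a)"
  proof
    fix p assume p: "p \<in> primesP0 d \<sigma> \<Phi>"
    have pp: "prime p" using p unfolding primesP0_def by simp
    have cases: "(infinite X \<or> p \<le> c) \<or> (\<exists>h \<in> X. \<exists>i. h i \<noteq> 0 \<and> int p dvd h i)
     \<or> (\<exists>f g. f \<in> terms \<Phi> \<and> primitive f \<and> g \<in> Delta d \<sigma> \<Phi> f \<and>
           (\<exists>lam. lam \<noteq> 0 \<and> smult_lp lam g \<in> Mmod \<Phi> f) \<and>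
           int p dvd int (min_lambda \<Phi> f g))"
      using p unfolding primesP0_def c_def X_def D_def by blast
    show "prime p \<and> (\<exists>a\<in>S1 \<union> S2 \<union> S3. int p dvd a)"
    proof -
      consider "p \<le> c" | "\<exists>h \<in> X. \<exists>i. h i \<noteq> 0 \<and> int p dvd h i"
        | "\<exists>f g. f \<in> terms \<Phi> \<and> primitive f \<and> g \<in> Delta d \<sigma> \<Phi> f \<and>
           (\<exists>lam. lam \<noteq> 0 \<and> smult_lp lam g \<in> Mmod \<Phi> f) \<and> int p dvd int (min_lambda \<Phi> f g)"
        using cases finX by blast
      then show ?thesis
      proof cases
        case 1
        have "1 \<le> p" using pp prime_ge_1_nat by blast
        then have "int p \<in> S1" unfolding S1_def using 1 by (intro imageI) simp
        then show ?thesis using pp by (intro conjI bexI[of _ "int p"]) auto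
      next
        case 2
        then obtain h i where hi: "h \<in> X" "h i \<noteq> 0" "int p dvd h i" by blast
        have "in_vars d h" using XP hi(1) by blast
        then have "i \<le> d" using hi(2) unfolding in_vars_def by (cases "i \<le> d") auto
        then have "h i \<in> S2" unfolding S2_def using hi by blast
        then show ?thesis using pp hi(3) by (intro conjI bexI[of _ "h i"]) auto
      next
        case 3
        then obtain f g where fg: "f \<in> terms \<Phi>" "primitive f" "g \<in> Delta d \<sigma> \<Phi> f"
          "\<exists>lam. lam \<noteq> 0 \<and> smult_lp lam g \<in> Mmod \<Phi> f" "int p dvd int (min_lambda \<Phi> f g)" by blast
        have "int (min_lambda \<Phi> f g) \<in> S3" unfolding S3_def using fg by blast
        then show ?thesis using pp fg(5) by (intro conjI bexI[of _ "int (min_lambda \<Phi> f g)"]) auto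
      qed
    qed
  qed
  have main: "finite (primesP0 d \<sigma> \<Phi>) \<and> (\<Prod>p\<in>primesP0 d \<sigma> \<Phi>. p) \<le> (\<Prod>a\<in>S1 \<union> S2 \<union> S3. nat \<bar>a\<bar>)"
    by (rule primes_prod_le[OF finS z Pcond])
  have one: "\<forall>a\<in>S1 \<union> S2 \<union> S3. 1 \<le> nat \<bar>a\<bar>"
  proof
    fix a assume "a \<in> S1 \<union> S2 \<union> S3"
    then have "a \<noteq> 0" using z by auto
    then show "1 \<le> nat \<bar>a\<bar>" by arith
  qed
  have U: "(\<Prod>a\<in>S1 \<union> S2 \<union> S3. nat \<bar>a\<bar>) \<le> (\<Prod>a\<in>S1. nat \<bar>a\<bar>) * (\<Prod>a\<in>S2. nat \<bar>a\<bar>) * (\<Prod>a\<in>S3. nat \<bar>a\<bar>)"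
  proof -
    have "(\<Prod>a\<in>S1 \<union> S2 \<union> S3. nat \<bar>a\<bar>) \<le> (\<Prod>a\<in>S1 \<union> S2. nat \<bar>a\<bar>) * (\<Prod>a\<in>S3. nat \<bar>a\<bar>)"
      by (rule prod_Un_le) (use finS finS3 one in auto)
    also have "(\<Prod>a\<in>S1 \<union> S2. nat \<bar>a\<bar>) \<le> (\<Prod>a\<in>S1. nat \<bar>a\<bar>) * (\<Prod>a\<in>S2. nat \<bar>a\<bar>)"
      by (rule prod_Un_le) (use finS2 one in \<open>auto simp: S1_def\<close>)
    finally show ?thesis by (simp add: mult_le_mono1)
  qed
  have A: "(\<Prod>a\<in>S1. nat \<bar>a\<bar>) \<le> 2 ^ (c * L)"
  proof -
    have "(\<Prod>a\<in>S1. nat \<bar>a\<bar>) = fact c" unfolding S1_def by (rule prod_int_range)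
    also have "fact c \<le> (2::nat) ^ (c * L)" by (rule fact_le_pow2[OF cL])
    finally show ?thesis .
  qed
  define B2 where "B2 = (b + 1) * (2 * d + 4) + 1"
  have CC: "2 * C * C \<le> 2 ^ B2"
  proof -
    have "2 * N \<le> 2 ^ (b + 1)" using bs(2) by simp
    then have "C \<le> (2 ^ (b + 1)) ^ (d + 2)" unfolding C_def using nf(2) by (intro power_mono) auto
    also have "\<dots> = 2 ^ ((b + 1) * (d + 2))" by (rule power_mult[symmetric])
    finally have Cb: "C \<le> 2 ^ ((b + 1) * (d + 2))" .
    have "2 * C * C \<le> 2 * 2 ^ ((b + 1) * (d + 2)) * 2 ^ ((b + 1) * (d + 2))"
      using Cb C1 by (intro mult_mono) auto
    also have "\<dots> = 2 ^ Suc ((b + 1) * (d + 2) + (b + 1) * (d + 2))"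
      by (simp only: power_Suc power_add mult.assoc)
    also have "Suc ((b + 1) * (d + 2) + (b + 1) * (d + 2)) = B2" unfolding B2_def by (simp add: algebra_simps)
    finally show ?thesis .
  qed
  have B: "(\<Prod>a\<in>S2. nat \<bar>a\<bar>) \<le> 2 ^ (B2 * (c * (d + 1)))"
  proof -
    have "(\<Prod>a\<in>S2. nat \<bar>a\<bar>) \<le> (2 ^ B2) ^ (c * (d + 1))"
    proof (rule prod_le_power)
      fix a assume "a \<in> S2"
      then obtain h i where "a = h i" "h \<in> X" unfolding S2_def by blast
      then have "\<bar>a\<bar> \<le> 2 * C * C" using XP by blast
      then have "\<bar>a\<bar> \<le> 2 ^ B2" using CC by linarith
      then show "0 \<le> nat \<bar>a\<bar> \<and> nat \<bar>a\<bar> \<le> 2 ^ B2" by (simp add: nat_le_iff)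
    qed (use cS2 in auto)
    also have "\<dots> = 2 ^ (B2 * (c * (d + 1)))" by (rule power_mult[symmetric])
    finally show ?thesis .
  qed
  have Cc: "(\<Prod>a\<in>S3. nat \<bar>a\<bar>) \<le> 2 ^ ((b * (d + 1)) * (2 * m * (3 * K)))"
  proof -
    have Nb: "nat N \<le> 2 ^ b" using bs(2) nf(2) by (simp add: nat_le_iff)
    have "(\<Prod>a\<in>S3. nat \<bar>a\<bar>) \<le> (2 ^ (b * (d + 1))) ^ (2 * m * (3 * K))"
    proof (rule prod_le_power)
      fix a' assume "a' \<in> S3"
      then have v: "0 < a'" "a' \<le> int (nat N ^ (d + 1))" using S3val by auto
      have "nat N ^ (d + 1) \<le> (2 ^ b) ^ (d + 1)" using Nb by (rule power_mono) simp
      also have "\<dots> = 2 ^ (b * (d + 1))" by (rule power_mult[symmetric])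
      finally have "nat N ^ (d + 1) \<le> 2 ^ (b * (d + 1))" .
      then have "int (nat N ^ (d + 1)) \<le> int (2 ^ (b * (d + 1)))" by (simp only: of_nat_le_iff)
      then have h: "a' \<le> int (2 ^ (b * (d + 1)))" using v(2) by linarith
      have "nat \<bar>a'\<bar> \<le> 2 ^ (b * (d + 1))" using h v(1) by (simp only: nat_le_iff)
      then show "0 \<le> nat \<bar>a'\<bar> \<and> nat \<bar>a'\<bar> \<le> 2 ^ (b * (d + 1))" by simp
    qed (use cS3 in auto)
    also have "\<dots> = 2 ^ ((b * (d + 1)) * (2 * m * (3 * K)))" by (rule power_mult[symmetric])
    finally show ?thesis .
  qed
  define E where "E = c * L + B2 * (c * (d + 1)) + (b * (d + 1)) * (2 * m * (3 * K))"
  have "(\<Prod>p\<in>primesP0 d \<sigma> \<Phi>. p) \<le> (\<Prod>a\<in>S1 \<union> S2 \<union> S3. nat \<bar>a\<bar>)" using main by simp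
  also have "\<dots> \<le> 2 ^ (c * L) * 2 ^ (B2 * (c * (d + 1))) * 2 ^ ((b * (d + 1)) * (2 * m * (3 * K)))"
    using U mult_le_mono[OF mult_le_mono[OF A B] Cc] by (rule le_trans)
  also have "\<dots> = 2 ^ E" unfolding E_def by (simp add: power_add)
  finally have pb: "(\<Prod>p\<in>primesP0 d \<sigma> \<Phi>. p) \<le> 2 ^ E" .
  have "E = c * (L + (d + 1) * B2) + 2 * m * (3 * K) * (b * (d + 1))"
    unfolding E_def by (simp add: algebra_simps)
  also have "\<dots> \<le> (18 * (K * K)) * (L + (d + 1) * B2) + 2 * m * (3 * K) * (b * (d + 1))"
  proof -
    have "c \<le> 2 * (3 * K) * (3 * K)" using cX DF mult_le_mono[OF mult_le_mono[OF order_refl[of 2], of "card D" "3 * K"], of "card D" "3 * K"]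
      by (meson le_trans)
    then have "c \<le> 18 * (K * K)" by simp
    then show ?thesis by (intro add_mono mult_le_mono1) auto
  qed
  also have "\<dots> \<le> 64 * m ^ 5 * (d + 2) ^ 4 * (b + 3)"
    using final_arith[of a d b] unfolding K_def L_def B2_def ma by (simp add: algebra_simps)
  finally have Eb: "E \<le> 64 * m ^ 5 * (d + 2) ^ 4 * (b + 3)" .
  have "log 2 (\<Prod>p\<in>primesP0 d \<sigma> \<Phi>. real p) \<le> real E"
    using pb main by (intro log_prod_le) (auto simp: primesP0_def prime_gt_0_nat)
  also have "\<dots> \<le> real (64 * m ^ 5 * (d + 2) ^ 4 * (b + 3))" using Eb by (simp only: of_nat_le_iff)
  also have "\<dots> = 64 * real m ^ 5 * (real d + 2) ^ 4 * (real_of_int (bitsize N) + 2)"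
    using bs(1) by (simp add: algebra_simps)
  finally show ?thesis using main unfolding m_def N_def by simp
qed

theorem mainTheorem9:
  fixes d :: nat and \<Phi> :: dsystem
  assumes "is_system d \<Phi>"
  shows "(finite (primesP \<Phi>) \<and>
          log 2 (\<Prod>p\<in>primesP \<Phi>. real p)
            \<le> real (length \<Phi>) ^ 2 * (real d + 2) * (real_of_int (bitsize (norm_inf d \<Phi>)) + 2))
       \<and> (\<forall>\<sigma>. var_order d \<sigma> \<and> elimination_property d \<sigma> \<Phi> \<longrightarrow>
          finite (primesP0 d \<sigma> \<Phi>) \<and>
          log 2 (\<Prod>p\<in>primesP0 d \<sigma> \<Phi>. real p)
            \<le> 64 * real (length \<Phi>) ^ 5 * (real d + 2) ^ 4 * (real_of_int (bitsize (norm_inf d \<Phi>)) + 2))"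
  using part1[OF assms] part2[OF assms] by blast

end
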